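(* Let $\{a_k\}_{k\in\mathbb{Z}}$, $\{b_k\}_{k\in\mathbb{Z}}$ be real sequences with $a_k>0$, and let $L$, $L^\ast$, $\mathcal{D}^\ast$ be as described in the context. Let $J^+$ and $J^-$ be the Jacobi operators on $\ell^2(\mathbb{Z}_{\geq 0})$ described in the context, and assume that $J^-$ has deficiency indices $(0,0)$ and $J^+$ has deficiency indices $(1,1)$ (so that $L$ has deficiency indices $(1,1)$). Let $\Phi_{i},\Phi_{-i}\in\ell^2(\mathbb{Z})$ satisfy $L^\ast\Phi_{\pm i}=\pm i\,\Phi_{\pm i}$, $\overline{(\Phi_i)_k}=(\Phi_{-i})_k$ for all $k\in\mathbb{Z}$, and $\|\Phi_{\pm i}\|=1$. For $\theta\in[0,2\pi)$ put $$\mathcal D_\theta=\{v\in\mathcal{D}^\ast\mid \lim_{N\to\infty}[v,e^{i\theta}\Phi_i+e^{-i\theta}\Phi_{-i}]_N=0\}.$$ Then the self-adjoint extensions of $(L,\mathcal{D}(\mathbb{Z}))$ are precisely the operators $(L^\ast,\mathcal D_\theta)$ (i.e. $L^\ast$ restricted to $\mathcal D_\theta$), $\theta\in[0,2\pi)$.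
   Context: $\{e_k\}_{k\in\mathbb{Z}}$ is the standard orthonormal basis of $\ell^2(\mathbb{Z})$, $\mathcal{D}(\mathbb{Z})$ the space of finite linear combinations of the $e_k$, and $L e_k=a_ke_{k+1}+b_ke_k+a_{k-1}e_{k-1}$ on $\mathcal{D}(\mathbb{Z})$. For $v\in\ell^2(\mathbb{Z})$, $L^\ast v=\sum_k(a_kv_{k+1}+b_kv_k+a_{k-1}v_{k-1})e_k$ (formally) and $\mathcal{D}^\ast=\{v\in\ell^2(\mathbb{Z})\mid L^\ast v\in\ell^2(\mathbb{Z})\}$; $(L^\ast,\mathcal D^\ast)$ is the adjoint of $L$. The Wronskian of two sequences $u,v$ is $[u,v]_k=a_k(u_{k+1}v_k-u_kv_{k+1})$. With $\{f_k\}_{k\geq0}$ the standard basis of $\ell^2(\mathbb{Z}_{\geq0})$, $J^+$ and $J^-$ are defined on finite linear combinations of the $f_k$ by $J^+f_k=a_kf_{k+1}+b_kf_k+a_{k-1}f_{k-1}$ ($k\geq1$), $J^+f_0=a_0f_1+b_0f_0$, and $J^-f_k=a_{-k-2}f_{k+1}+b_{-k-1}f_k+a_{-k-1}f_{k-1}$ ($k\geq1$), $J^-f_0=a_{-2}f_1+b_{-1}f_0$; these are densely defined symmetric operators. For a densely defined symmetric operator $T$, the deficiency indices are $(\dim\ker(T^\ast-i),\dim\ker(T^\ast+i))$. *)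

theory Defs
  imports "HOL-Analysis.Analysis"
begin

definition l2 :: "('i \<Rightarrow> complex) set" where
  "l2 = {v. (\<lambda>k. (cmod (v k))\<^sup>2) summable_on UNIV}"

definition l2_inner :: "('i \<Rightarrow> complex) \<Rightarrow> ('i \<Rightarrow> complex) \<Rightarrow> complex" where
  "l2_inner u v = (\<Sum>\<^sub>\<infinity>k. cnj (u k) * v k)"

definition l2_norm :: "('i \<Rightarrow> complex) \<Rightarrow> real" where
  "l2_norm v = sqrt (\<Sum>\<^sub>\<infinity>k. (cmod (v k))\<^sup>2)"

definition fin_seq :: "('i \<Rightarrow> complex) set" where
  "fin_seq = {v. finite {k. v k \<noteq> 0}}"

definition adj_dom :: "(('i \<Rightarrow> complex) \<Rightarrow> ('i \<Rightarrow> complex)) \<Rightarrow> ('i \<Rightarrow> complex) set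
    \<Rightarrow> ('i \<Rightarrow> complex) set" where
  "adj_dom T D = {w \<in> l2. \<exists>z \<in> l2. \<forall>u \<in> D. l2_inner (T u) w = l2_inner u z}"

definition adj :: "(('i \<Rightarrow> complex) \<Rightarrow> ('i \<Rightarrow> complex)) \<Rightarrow> ('i \<Rightarrow> complex) set
    \<Rightarrow> ('i \<Rightarrow> complex) \<Rightarrow> ('i \<Rightarrow> complex)" where
  "adj T D w = (SOME z. z \<in> l2 \<and> (\<forall>u \<in> D. l2_inner (T u) w = l2_inner u z))"

definition adj_eigspace :: "(('i \<Rightarrow> complex) \<Rightarrow> ('i \<Rightarrow> complex)) \<Rightarrow> ('i \<Rightarrow> complex) set
    \<Rightarrow> complex \<Rightarrow> ('i \<Rightarrow> complex) set" where
  "adj_eigspace T D c = {w \<in> adj_dom T D. adj T D w = (\<lambda>k. c * w k)}"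

definition dim0 :: "('i \<Rightarrow> complex) set \<Rightarrow> bool" where
  "dim0 S \<longleftrightarrow> S = {\<lambda>k. 0}"

definition dim1 :: "('i \<Rightarrow> complex) set \<Rightarrow> bool" where
  "dim1 S \<longleftrightarrow> (\<exists>w \<in> S. w \<noteq> (\<lambda>k. 0) \<and> S = {(\<lambda>k. c * w k) | c. True})"

definition def_indices_00 :: "(('i \<Rightarrow> complex) \<Rightarrow> ('i \<Rightarrow> complex)) \<Rightarrow> ('i \<Rightarrow> complex) set \<Rightarrow> bool" where
  "def_indices_00 T D \<longleftrightarrow> dim0 (adj_eigspace T D \<i>) \<and> dim0 (adj_eigspace T D (- \<i>))"

definition def_indices_11 :: "(('i \<Rightarrow> complex) \<Rightarrow> ('i \<Rightarrow> complex)) \<Rightarrow> ('i \<Rightarrow> complex) set \<Rightarrow> bool" where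
  "def_indices_11 T D \<longleftrightarrow> dim1 (adj_eigspace T D \<i>) \<and> dim1 (adj_eigspace T D (- \<i>))"

definition self_adjoint_ext :: "(('i \<Rightarrow> complex) \<Rightarrow> ('i \<Rightarrow> complex)) \<Rightarrow> ('i \<Rightarrow> complex) set
    \<Rightarrow> (('i \<Rightarrow> complex) \<Rightarrow> ('i \<Rightarrow> complex)) \<Rightarrow> ('i \<Rightarrow> complex) set \<Rightarrow> bool" where
  "self_adjoint_ext T D A DA \<longleftrightarrow>
     D \<subseteq> DA \<and> DA \<subseteq> l2 \<and> (\<forall>v \<in> DA. A v \<in> l2) \<and> (\<forall>v \<in> D. A v = T v) \<and>
     adj_dom A DA = DA \<and> (\<forall>w \<in> DA. adj A DA w = A w)"

text \<open>The formal action of L (equals L on fin_seq and L* on all sequences).\<close>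
definition Lact :: "(int \<Rightarrow> real) \<Rightarrow> (int \<Rightarrow> real) \<Rightarrow> (int \<Rightarrow> complex) \<Rightarrow> (int \<Rightarrow> complex)" where
  "Lact a b v = (\<lambda>k. of_real (a k) * v (k + 1) + of_real (b k) * v k + of_real (a (k - 1)) * v (k - 1))"

definition Dstar :: "(int \<Rightarrow> real) \<Rightarrow> (int \<Rightarrow> real) \<Rightarrow> (int \<Rightarrow> complex) set" where
  "Dstar a b = {v \<in> l2. Lact a b v \<in> l2}"

definition wronskian :: "(int \<Rightarrow> real) \<Rightarrow> (int \<Rightarrow> complex) \<Rightarrow> (int \<Rightarrow> complex) \<Rightarrow> int \<Rightarrow> complex" where
  "wronskian a u v k = of_real (a k) * (u (k + 1) * v k - u k * v (k + 1))"

definition Jplus :: "(int \<Rightarrow> real) \<Rightarrow> (int \<Rightarrow> real) \<Rightarrow> (nat \<Rightarrow> complex) \<Rightarrow> (nat \<Rightarrow> complex)" where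
  "Jplus a b v = (\<lambda>j. of_real (a (int j)) * v (j + 1) + of_real (b (int j)) * v j
      + (if j = 0 then 0 else of_real (a (int j - 1)) * v (j - 1)))"

definition Jminus :: "(int \<Rightarrow> real) \<Rightarrow> (int \<Rightarrow> real) \<Rightarrow> (nat \<Rightarrow> complex) \<Rightarrow> (nat \<Rightarrow> complex)" where
  "Jminus a b v = (\<lambda>j. of_real (a (- int j - 2)) * v (j + 1) + of_real (b (- int j - 1)) * v j
      + (if j = 0 then 0 else of_real (a (- int j - 1)) * v (j - 1)))"

definition Dtheta :: "(int \<Rightarrow> real) \<Rightarrow> (int \<Rightarrow> real) \<Rightarrow> (int \<Rightarrow> complex) \<Rightarrow> (int \<Rightarrow> complex)
    \<Rightarrow> real \<Rightarrow> (int \<Rightarrow> complex) set" where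
  "Dtheta a b Pp Pm \<theta> = {v \<in> Dstar a b.
     (\<lambda>N::nat. wronskian a v (\<lambda>k. exp (\<i> * of_real \<theta>) * Pp k + exp (- \<i> * of_real \<theta>) * Pm k) (int N))
       \<longlonglongrightarrow> 0}"

end

theory Submission
  imports Defs
begin


lemma l2_iff: "v \<in> l2 \<longleftrightarrow> (\<lambda>k. (cmod (v k))\<^sup>2) summable_on UNIV"
  by (simp add: l2_def)

lemma l2_abs_prod:
  assumes "u \<in> l2" "v \<in> l2"
  shows "(\<lambda>k. norm (u k * v k)) summable_on UNIV"
proof (rule Infinite_Sum.abs_summable_on_comparison_test)
  show "(\<lambda>k. norm (((cmod (u k))\<^sup>2 + (cmod (v k))\<^sup>2) / 2)) summable_on UNIV"
  proof -
    have "(\<lambda>k. ((cmod (u k))\<^sup>2 + (cmod (v k))\<^sup>2) * (1/2)) summable_on UNIV"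
      using assms unfolding l2_iff by (intro summable_on_cmult_left summable_on_add)
    then show ?thesis by simp
  qed
  fix k
  have "cmod (u k) * cmod (v k) \<le> ((cmod (u k))\<^sup>2 + (cmod (v k))\<^sup>2) / 2"
    using sum_squares_bound[of "cmod (u k)" "cmod (v k)", unfolded mult.assoc] by (simp add: field_simps)
  then show "norm (u k * v k) \<le> norm (((cmod (u k))\<^sup>2 + (cmod (v k))\<^sup>2) / 2)"
    by (simp add: norm_mult)
qed

lemma l2_prod_summable:
  assumes "u \<in> l2" "v \<in> l2"
  shows "(\<lambda>k. u k * v k) summable_on UNIV"
  using abs_summable_summable[OF l2_abs_prod[OF assms]] .

lemma l2_cnj: "u \<in> l2 \<Longrightarrow> (\<lambda>k. cnj (u k)) \<in> l2"
  by (simp add: l2_iff)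

lemma l2_scale: "u \<in> l2 \<Longrightarrow> (\<lambda>k. c * u k) \<in> l2"
  unfolding l2_iff by (simp add: norm_mult power_mult_distrib summable_on_cmult_right)

lemma l2_add: assumes "u \<in> l2" "v \<in> l2" shows "(\<lambda>k. u k + v k) \<in> l2"
  unfolding l2_iff
proof (rule summable_on_comparison_test)
  show "(\<lambda>k. 2 * (cmod (u k))\<^sup>2 + 2 * (cmod (v k))\<^sup>2) summable_on UNIV"
    using assms unfolding l2_iff by (intro summable_on_add summable_on_cmult_right)
  fix k
  have "cmod (u k + v k) \<le> cmod (u k) + cmod (v k)" by (rule norm_triangle_ineq)
  then have "(cmod (u k + v k))\<^sup>2 \<le> (cmod (u k) + cmod (v k))\<^sup>2"
    by (simp add: power_mono)
  also have "\<dots> \<le> 2 * (cmod (u k))\<^sup>2 + 2 * (cmod (v k))\<^sup>2"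
    using sum_squares_bound[of "cmod (u k)" "cmod (v k)", unfolded mult.assoc] unfolding power2_sum mult.assoc by linarith
  finally show "(cmod (u k + v k))\<^sup>2 \<le> 2 * (cmod (u k))\<^sup>2 + 2 * (cmod (v k))\<^sup>2" .
qed simp

lemma l2_diff: assumes "u \<in> l2" "v \<in> l2" shows "(\<lambda>k. u k - v k) \<in> l2"
  using l2_add[OF assms(1) l2_scale[OF assms(2), of "-1"]] by simp

lemma l2_shift: "(v :: int \<Rightarrow> complex) \<in> l2 \<Longrightarrow> (\<lambda>k. v (k + c)) \<in> l2"
proof -
  assume "v \<in> l2"
  then have "(\<lambda>k. (cmod (v k))\<^sup>2) summable_on ((\<lambda>k. k + c) ` UNIV)"
    unfolding l2_iff by (metis surj_plus_right)
  then show ?thesis unfolding l2_iff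
    by (subst (asm) summable_on_reindex) (auto simp: o_def)
qed

lemma fin_seq_l2: "u \<in> fin_seq \<Longrightarrow> u \<in> l2"
proof -
  assume "u \<in> fin_seq"
  then have "(\<lambda>k. (cmod (u k))\<^sup>2) summable_on {k. u k \<noteq> 0}" unfolding fin_seq_def by simp
  then show ?thesis unfolding l2_iff
    by (rule summable_on_cong_neutral[THEN iffD1, rotated -1]) auto
qed

lemma l2_inner_fin:
  assumes "finite S" "\<And>k. k \<notin> S \<Longrightarrow> x k = 0"
  shows "l2_inner x y = (\<Sum>k\<in>S. cnj (x k) * y k)"
proof -
  have "l2_inner x y = infsum (\<lambda>k. cnj (x k) * y k) S"
    unfolding l2_inner_def by (rule infsum_cong_neutral) (auto simp: assms)
  then show ?thesis using assms by simp
qed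

lemma unique_fin:
  fixes x y :: "'i \<Rightarrow> complex"
  assumes "\<And>u. u \<in> fin_seq \<Longrightarrow> l2_inner u x = l2_inner u y"
  shows "x = y"
proof
  fix k
  define d :: "'i \<Rightarrow> complex" where "d = (\<lambda>j. if j = k then (1::complex) else 0)"
  have "d \<in> fin_seq" unfolding fin_seq_def d_def by simp
  have "l2_inner d x = x k" by (subst l2_inner_fin[of "{k}"]) (auto simp: d_def)
  moreover have "l2_inner d y = y k" by (subst l2_inner_fin[of "{k}"]) (auto simp: d_def)
  ultimately show "x k = y k" using assms[OF \<open>d \<in> fin_seq\<close>] by simp
qed




lemma Lact_cnj: "Lact a b (\<lambda>k. cnj (u k)) = (\<lambda>k. cnj (Lact a b u k))"
  by (simp add: Lact_def fun_eq_iff)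

lemma Lact_lin: "Lact a b (\<lambda>k. c * u k + d * v k) = (\<lambda>k. c * Lact a b u k + d * Lact a b v k)"
  by (simp add: Lact_def fun_eq_iff algebra_simps)

lemma Lact_scale: "Lact a b (\<lambda>k. c * u k) = (\<lambda>k. c * Lact a b u k)"
  by (simp add: Lact_def fun_eq_iff algebra_simps)

lemma wr_step: "wronskian a u v k - wronskian a u v (k - 1) = Lact a b u k * v k - u k * Lact a b v k"
  by (simp add: Lact_def wronskian_def algebra_simps)

lemma wr_cnj: "wronskian a (\<lambda>k. cnj (u k)) (\<lambda>k. cnj (v k)) k = cnj (wronskian a u v k)"
  by (simp add: wronskian_def)

lemma wr_antisym: "wronskian a u v k = - wronskian a v u k"
  by (simp add: wronskian_def algebra_simps)

lemma wr_lin2: "wronskian a u (\<lambda>k. c * v k + d * w k) k = c * wronskian a u v k + d * wronskian a u w k"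
  by (simp add: wronskian_def algebra_simps)

lemma wr_plucker: "wronskian a u v k * wronskian a x y k =
   wronskian a u x k * wronskian a v y k - wronskian a u y k * wronskian a v x k"
  unfolding wronskian_def by algebra

lemma green_int:
  "(\<Sum>j\<le>n. Lact a b u (m + int j) * v (m + int j) - u (m + int j) * Lact a b v (m + int j))
     = wronskian a u v (m + int n) - wronskian a u v (m - 1)"
proof (induction n)
  case 0
  show ?case using wr_step[of a u v m b] by simp
next
  case (Suc n)
  have "wronskian a u v (m + int (Suc n)) - wronskian a u v (m + int (Suc n) - 1) =
     Lact a b u (m + int (Suc n)) * v (m + int (Suc n)) - u (m + int (Suc n)) * Lact a b v (m + int (Suc n))"
    by (rule wr_step)
  moreover have "m + int (Suc n) - 1 = m + int n" by simp
  ultimately show ?case using Suc by (simp only: sum.atMost_Suc) (simp add: algebra_simps)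
qed

lemma green_Jminus:
  "(\<Sum>j\<le>n. Jminus a b u j * v j - u j * Jminus a b v j)
     = of_real (a (- int n - 2)) * (u (n + 1) * v n - u n * v (n + 1))"
proof (induction n)
  case 0
  show ?case by (simp add: Jminus_def algebra_simps)
next
  case (Suc n)
  have e1: "- int (Suc n) - 1 = - int n - 2" by simp
  have e2: "- int (Suc n) - 2 = - int n - 3" by simp
  have st: "Jminus a b u (Suc n) * v (Suc n) - u (Suc n) * Jminus a b v (Suc n) =
     of_real (a (- int n - 3)) * (u (Suc (Suc n)) * v (Suc n) - u (Suc n) * v (Suc (Suc n)))
     - of_real (a (- int n - 2)) * (u (Suc n) * v n - u n * v (Suc n))"
    unfolding Jminus_def by (simp add: e1 e2 algebra_simps)
  have "(\<Sum>j\<le>Suc n. Jminus a b u j * v j - u j * Jminus a b v j) =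
     (\<Sum>j\<le>n. Jminus a b u j * v j - u j * Jminus a b v j) +
     (Jminus a b u (Suc n) * v (Suc n) - u (Suc n) * Jminus a b v (Suc n))"
    by (rule sum.atMost_Suc)
  also have "\<dots> = of_real (a (- int n - 2)) * (u (n + 1) * v n - u n * v (n + 1)) +
     (of_real (a (- int n - 3)) * (u (Suc (Suc n)) * v (Suc n) - u (Suc n) * v (Suc (Suc n)))
     - of_real (a (- int n - 2)) * (u (Suc n) * v n - u n * v (Suc n)))"
    by (simp only: Suc.IH st)
  also have "\<dots> = of_real (a (- int (Suc n) - 2)) * (u (Suc n + 1) * v (Suc n) - u (Suc n) * v (Suc n + 1))"
    by (simp only: e2) simp
  finally show ?case .
qed

lemma int_interval_image: "(\<lambda>j. m + int j) ` {..n} = {m..m + int n}"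
proof
  show "{m..m + int n} \<subseteq> (\<lambda>j. m + int j) ` {..n}"
  proof
    fix k assume "k \<in> {m..m + int n}"
    then have "k = m + int (nat (k - m))" "nat (k - m) \<le> n" by auto
    then show "k \<in> (\<lambda>j. m + int j) ` {..n}" by blast
  qed
qed auto

lemma sum_int_interval: "(\<Sum>k\<in>{m..m + int n}. g k) = (\<Sum>j\<le>n. g (m + int j))"
proof -
  have "inj_on (\<lambda>j. m + int j) {..n}" by (auto simp: inj_on_def)
  then show ?thesis by (subst int_interval_image[symmetric]) (simp add: sum.reindex)
qed

lemma fin_support_bound:
  assumes "(u :: int \<Rightarrow> complex) \<in> fin_seq"
  obtains M :: nat where "\<And>k. \<bar>k\<bar> > int M \<Longrightarrow> u k = 0"
proof -
  have "finite {k. u k \<noteq> 0}" using assms by (simp add: fin_seq_def)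
  then have "finite ((\<lambda>k. nat \<bar>k\<bar>) ` {k. u k \<noteq> 0})" by simp
  then obtain M where M: "\<forall>n\<in>(\<lambda>k. nat \<bar>k\<bar>) ` {k. u k \<noteq> 0}. n \<le> M"
    using finite_nat_set_iff_bounded_le by blast
  show ?thesis
  proof (rule that[of M])
    fix k :: int assume k: "\<bar>k\<bar> > int M"
    show "u k = 0"
    proof (rule ccontr)
      assume "u k \<noteq> 0"
      then have "nat \<bar>k\<bar> \<le> M" using M by blast
      then show False using k by linarith
    qed
  qed
qed

lemma Lact_fin_symm:
  assumes "u \<in> fin_seq"
  shows "l2_inner (Lact a b u) w = l2_inner u (Lact a b w)"
proof -
  obtain M :: nat where M: "\<And>k. \<bar>k\<bar> > int M \<Longrightarrow> u k = 0"
    using fin_support_bound[OF assms] by blast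
  define m where "m = - int M - 1"
  define n where "n = 2 * M + 2"
  have sub: "\<And>k. k \<notin> {m..m + int n} \<Longrightarrow> \<bar>k\<bar> > int M + 1" by (auto simp: m_def n_def)
  have z1: "\<And>k. k \<notin> {m..m + int n} \<Longrightarrow> u k = 0" using sub M by force
  have z2: "\<And>k. k \<notin> {m..m + int n} \<Longrightarrow> Lact a b u k = 0"
  proof -
    fix k assume "k \<notin> {m..m + int n}"
    then have "\<bar>k\<bar> > int M + 1" by (rule sub)
    then have "u k = 0" "u (k+1) = 0" "u (k - 1) = 0" using M by auto
    then show "Lact a b u k = 0" by (simp add: Lact_def)
  qed
  have "l2_inner (Lact a b u) w = (\<Sum>k\<in>{m..m + int n}. cnj (Lact a b u k) * w k)"
    by (rule l2_inner_fin) (auto simp: z2)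
  also have "\<dots> = (\<Sum>k\<in>{m..m + int n}. Lact a b (\<lambda>k. cnj (u k)) k * w k)"
    by (simp only: Lact_cnj)
  also have "\<dots> = (\<Sum>k\<in>{m..m + int n}. cnj (u k) * Lact a b w k)
      + (\<Sum>k\<in>{m..m + int n}. Lact a b (\<lambda>k. cnj (u k)) k * w k - cnj (u k) * Lact a b w k)"
    by (simp only: sum_subtractf) simp
  also have "(\<Sum>k\<in>{m..m + int n}. Lact a b (\<lambda>k. cnj (u k)) k * w k - cnj (u k) * Lact a b w k) = 0"
  proof -
    have "(\<Sum>k\<in>{m..m + int n}. Lact a b (\<lambda>k. cnj (u k)) k * w k - cnj (u k) * Lact a b w k)
       = wronskian a (\<lambda>k. cnj (u k)) w (m + int n) - wronskian a (\<lambda>k. cnj (u k)) w (m - 1)"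
      unfolding sum_int_interval by (rule green_int)
    also have "\<dots> = 0"
    proof -
      have e: "m + int n = int M + 1" "m - 1 = - int M - 2" by (simp_all add: m_def n_def)
      have "u (int M + 1) = 0" "u (int M + 1 + 1) = 0" "u (- int M - 2) = 0" "u (- int M - 2 + 1) = 0"
        by (rule M; simp)+
      then show ?thesis unfolding e wronskian_def by simp
    qed
    finally show ?thesis .
  qed
  also have "(\<Sum>k\<in>{m..m + int n}. cnj (u k) * Lact a b w k) = l2_inner u (Lact a b w)"
    by (rule l2_inner_fin[symmetric]) (auto simp: z1)
  finally show ?thesis by simp
qed




lemma adj_char:
  assumes "fin_seq \<subseteq> DA" "\<And>u. u \<in> fin_seq \<Longrightarrow> A u = Lact a b u"
    "\<And>u. u \<in> DA \<Longrightarrow> l2_inner (A u) w = l2_inner u z"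
  shows "Lact a b w = z"
proof (rule unique_fin)
  fix u :: "int \<Rightarrow> complex" assume u: "u \<in> fin_seq"
  have "l2_inner u (Lact a b w) = l2_inner (Lact a b u) w" by (rule Lact_fin_symm[OF u, symmetric])
  also have "\<dots> = l2_inner (A u) w" using assms(2)[OF u] by simp
  also have "\<dots> = l2_inner u z" using assms(1,3) u by blast
  finally show "l2_inner u (Lact a b w) = l2_inner u z" .
qed

lemma fin_support_bound_nat:
  assumes "(u :: nat \<Rightarrow> complex) \<in> fin_seq"
  obtains n :: nat where "\<And>j. j \<ge> n \<Longrightarrow> u j = 0"
proof -
  have "finite {k. u k \<noteq> 0}" using assms by (simp add: fin_seq_def)
  then obtain n where "\<And>k. k \<in> {k. u k \<noteq> 0} \<Longrightarrow> k < n"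
    by (metis finite_nat_set_iff_bounded)
  then show ?thesis using that[of n] by force
qed

lemma Jminus_cnj: "Jminus a b (\<lambda>k. cnj (u k)) = (\<lambda>k. cnj (Jminus a b u k))"
  by (simp add: Jminus_def fun_eq_iff)

lemma Jminus_fin_symm:
  assumes "u \<in> fin_seq"
  shows "l2_inner (Jminus a b u) w = l2_inner u (Jminus a b w)"
proof -
  obtain n :: nat where M: "\<And>j. j \<ge> n \<Longrightarrow> u j = 0"
    using fin_support_bound_nat[OF assms] by blast
  have z1: "\<And>k. k \<notin> {..Suc n} \<Longrightarrow> u k = 0" using M by auto
  have z2: "\<And>k. k \<notin> {..Suc n} \<Longrightarrow> Jminus a b u k = 0"
  proof -
    fix k assume "k \<notin> {..Suc n}"
    then have "u k = 0" "u (k+1) = 0" "u (k - 1) = 0" using M by auto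
    then show "Jminus a b u k = 0" by (simp add: Jminus_def)
  qed
  have "l2_inner (Jminus a b u) w = (\<Sum>k\<le>Suc n. cnj (Jminus a b u k) * w k)"
    by (rule l2_inner_fin) (auto simp: z2)
  also have "\<dots> = (\<Sum>k\<le>Suc n. Jminus a b (\<lambda>k. cnj (u k)) k * w k)"
    by (simp only: Jminus_cnj)
  also have "\<dots> = (\<Sum>k\<le>Suc n. cnj (u k) * Jminus a b w k)
      + (\<Sum>k\<le>Suc n. Jminus a b (\<lambda>k. cnj (u k)) k * w k - cnj (u k) * Jminus a b w k)"
    by (simp only: sum_subtractf) simp
  also have "(\<Sum>k\<le>Suc n. Jminus a b (\<lambda>k. cnj (u k)) k * w k - cnj (u k) * Jminus a b w k) = 0"
  proof -
    have "u (Suc n + 1) = 0" "u (Suc n) = 0" by (rule M; simp)+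
    then show ?thesis unfolding green_Jminus by simp
  qed
  also have "(\<Sum>k\<le>Suc n. cnj (u k) * Jminus a b w k) = l2_inner u (Jminus a b w)"
    by (rule l2_inner_fin[symmetric]) (auto simp: z1)
  finally show ?thesis by simp
qed

lemma eig_half:
  assumes Jm: "def_indices_00 (Jminus a b) fin_seq"
    and eq: "\<And>k. k \<le> -1 \<Longrightarrow> Lact a b y k = \<i> * y k"
    and y0: "y 0 = 0"
    and l2y: "(\<lambda>j::nat. y (- int j - 1)) \<in> l2"
  shows "y (- int j - 1) = 0"
proof -
  define w where "w = (\<lambda>j::nat. y (- int j - 1))"
  have Jw: "Jminus a b w = (\<lambda>j. \<i> * w j)"
  proof
    fix j :: nat
    have e: "Lact a b y (- int j - 1) = \<i> * y (- int j - 1)" by (rule eq) simp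
    show "Jminus a b w j = \<i> * w j"
    proof (cases "j = 0")
      case True
      then show ?thesis using e y0 by (simp add: Jminus_def Lact_def w_def algebra_simps)
    next
      case False
      have i1: "- int j - 1 + 1 = - int (j - 1) - 1" using False by simp
      have i2: "- int j - 1 - 1 = - int (j + 1) - 1" by simp
      have i3: "- int j - 1 - 1 = - int j - 2" by simp
      show ?thesis using e False unfolding Jminus_def Lact_def w_def i1
        by (simp add: i2[symmetric] i3 algebra_simps)
    qed
  qed
  have wl2: "w \<in> l2" using l2y by (simp add: w_def)
  have iwl2: "(\<lambda>j. \<i> * w j) \<in> l2" by (rule l2_scale[OF wl2])
  have P: "\<forall>u\<in>fin_seq. l2_inner (Jminus a b u) w = l2_inner u (\<lambda>j. \<i> * w j)"
    using Jminus_fin_symm Jw by metis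
  then have dom: "w \<in> adj_dom (Jminus a b) fin_seq"
    unfolding adj_dom_def using wl2 iwl2 by blast
  have "adj (Jminus a b) fin_seq w \<in> l2 \<and>
      (\<forall>u\<in>fin_seq. l2_inner (Jminus a b u) w = l2_inner u (adj (Jminus a b) fin_seq w))"
    unfolding adj_def by (rule someI[of _ "\<lambda>j. \<i> * w j"]) (use P iwl2 in blast)
  then have "adj (Jminus a b) fin_seq w = (\<lambda>j. \<i> * w j)"
    using P by (intro unique_fin) auto
  then have "w \<in> adj_eigspace (Jminus a b) fin_seq \<i>"
    using dom by (simp add: adj_eigspace_def)
  then have "w = (\<lambda>k. 0)" using Jm by (simp add: def_indices_00_def dim0_def)
  then show ?thesis by (simp add: w_def fun_eq_iff)
qed

lemma sol_unique:
  assumes apos: "\<And>k. a k > 0"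
    and eq: "Lact a b y = (\<lambda>k. c * y k)"
    and z: "y m = 0" "y (m + 1) = 0"
  shows "y k = 0"
proof -
  have anz: "\<And>k. complex_of_real (a k) \<noteq> 0" using apos by (metis less_irrefl of_real_eq_0_iff)
  have eqk: "\<And>k. of_real (a k) * y (k + 1) + of_real (b k) * y k + of_real (a (k - 1)) * y (k - 1) = c * y k"
    using eq by (simp add: Lact_def fun_eq_iff)
  have fw: "y (m + int n) = 0 \<and> y (m + int n + 1) = 0" for n
  proof (induction n)
    case 0 then show ?case using z by simp
  next
    case (Suc n)
    define k where "k = m + int n + 1"
    have "y k = 0" "y (k - 1) = 0" using Suc by (simp_all add: k_def)
    then have "of_real (a k) * y (k + 1) = 0" using eqk[of k] by simp
    then have "y (k + 1) = 0" using anz by simp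
    moreover have "m + int (Suc n) = k" "m + int (Suc n) + 1 = k + 1" by (simp_all add: k_def)
    ultimately show ?case using \<open>y k = 0\<close> by metis
  qed
  have bw: "y (m - int n) = 0 \<and> y (m - int n + 1) = 0" for n
  proof (induction n)
    case 0 then show ?case using z by simp
  next
    case (Suc n)
    define k where "k = m - int n"
    have "y k = 0" "y (k + 1) = 0" using Suc by (simp_all add: k_def)
    then have "of_real (a (k - 1)) * y (k - 1) = 0" using eqk[of k] by simp
    then have "y (k - 1) = 0" using anz by simp
    moreover have "m - int (Suc n) = k - 1" "m - int (Suc n) + 1 = k" by (simp_all add: k_def)
    ultimately show ?case using \<open>y k = 0\<close> by metis
  qed
  show ?thesis
  proof (cases "k \<ge> m")
    case True
    then have "k = m + int (nat (k - m))" by simp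
    then show ?thesis using fw[of "nat (k - m)"] by metis
  next
    case False
    then have "k = m - int (nat (m - k))" by simp
    then show ?thesis using bw[of "nat (m - k)"] by metis
  qed
qed




lemma cs_fin:
  "(\<Sum>i\<in>A. cmod (x i) * cmod (y i)) \<le> sqrt (\<Sum>i\<in>A. (cmod (x i))\<^sup>2) * sqrt (\<Sum>i\<in>A. (cmod (y i))\<^sup>2)"
  using L2_set_mult_ineq[where f="\<lambda>i. cmod (x i)" and A=A and g="\<lambda>i. cmod (y i)"] by (simp add: L2_set_def)

lemma sq_sum_bound: "cmod x * cmod y \<le> ((cmod x)\<^sup>2 + (cmod y)\<^sup>2) / 2"
  using sum_squares_bound[of "cmod x" "cmod y", unfolded mult.assoc] by (simp add: field_simps)

lemma cs_inf:
  fixes x y :: "nat \<Rightarrow> complex"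
  assumes sx: "summable (\<lambda>n. (cmod (x n))\<^sup>2)" and sy: "summable (\<lambda>n. (cmod (y n))\<^sup>2)"
  shows "summable (\<lambda>n. cmod (x n) * cmod (y n))"
    and "(\<Sum>n. cmod (x n) * cmod (y n)) \<le> sqrt (\<Sum>n. (cmod (x n))\<^sup>2) * sqrt (\<Sum>n. (cmod (y n))\<^sup>2)"
proof -
  have s2: "summable (\<lambda>n. ((cmod (x n))\<^sup>2 + (cmod (y n))\<^sup>2) / 2)"
    using summable_add[OF sx sy] by (rule summable_divide)
  show s: "summable (\<lambda>n. cmod (x n) * cmod (y n))"
  proof (rule summable_comparison_test'[OF s2])
    fix n
    show "norm (cmod (x n) * cmod (y n)) \<le> ((cmod (x n))\<^sup>2 + (cmod (y n))\<^sup>2) / 2"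
      using sq_sum_bound[of "x n" "y n"] by simp
  qed
  show "(\<Sum>n. cmod (x n) * cmod (y n)) \<le> sqrt (\<Sum>n. (cmod (x n))\<^sup>2) * sqrt (\<Sum>n. (cmod (y n))\<^sup>2)"
  proof (rule suminf_le_const[OF s])
    fix N
    have "(\<Sum>n<N. cmod (x n) * cmod (y n)) \<le> sqrt (\<Sum>n<N. (cmod (x n))\<^sup>2) * sqrt (\<Sum>n<N. (cmod (y n))\<^sup>2)"
      by (rule cs_fin)
    also have "\<dots> \<le> sqrt (\<Sum>n. (cmod (x n))\<^sup>2) * sqrt (\<Sum>n. (cmod (y n))\<^sup>2)"
      by (intro mult_mono real_sqrt_le_mono sum_le_suminf sx sy real_sqrt_ge_zero suminf_nonneg sum_nonneg) auto
    finally show "(\<Sum>n<N. cmod (x n) * cmod (y n)) \<le> sqrt (\<Sum>n. (cmod (x n))\<^sup>2) * sqrt (\<Sum>n. (cmod (y n))\<^sup>2)" .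
  qed
qed

lemma prod_summable:
  fixes x y :: "nat \<Rightarrow> complex"
  assumes sx: "summable (\<lambda>n. (cmod (x n))\<^sup>2)" and sy: "summable (\<lambda>n. (cmod (y n))\<^sup>2)"
  shows "summable (\<lambda>n. x n * y n)"
  by (rule summable_comparison_test'[OF cs_inf(1)[OF sx sy]]) (simp add: norm_mult)

lemma al0:
  fixes u \<phi> \<epsilon> f P E :: "nat \<Rightarrow> complex" and \<kappa> :: complex and c :: real
  assumes su: "summable (\<lambda>n. (cmod (u n))\<^sup>2)" and sp: "summable (\<lambda>n. (cmod (\<phi> n))\<^sup>2)"
    and sf: "summable (\<lambda>n. (cmod (f n))\<^sup>2)"
    and c: "c > 0" and Pc: "\<And>n. cmod (P n) \<ge> c"
    and small: "6 * (\<Sum>n. (cmod (f n))\<^sup>2) * (\<Sum>n. (cmod (\<phi> n))\<^sup>2) \<le> c\<^sup>2"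
    and E: "\<And>n. E (Suc n) = E n - f n * \<epsilon> n"
    and idt: "\<And>n. \<kappa> * u n = \<phi> n * E n - \<epsilon> n * P n"
  shows "summable (\<lambda>n. (cmod (\<epsilon> n))\<^sup>2)"
proof -
  define F where "F = (\<Sum>n. (cmod (f n))\<^sup>2)"
  define SP where "SP = (\<Sum>n. (cmod (\<phi> n))\<^sup>2)"
  define SU where "SU = (\<Sum>n. (cmod (u n))\<^sup>2)"
  define C where "C = 3 * (cmod (E 0))\<^sup>2 * SP + 3 * (cmod \<kappa>)\<^sup>2 * SU"
  have F0: "F \<ge> 0" unfolding F_def by (intro suminf_nonneg sf) auto
  have SP0: "SP \<ge> 0" unfolding SP_def by (intro suminf_nonneg sp) auto
  have Esum: "E n = E 0 - (\<Sum>j<n. f j * \<epsilon> j)" for n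
    by (induction n) (simp_all add: E)
  have bound: "(\<Sum>n<N. (cmod (\<epsilon> n))\<^sup>2) \<le> 2 * C / c\<^sup>2" for N
  proof -
    define T where "T = (\<Sum>n<N. (cmod (\<epsilon> n))\<^sup>2)"
    have T0: "T \<ge> 0" unfolding T_def by (intro sum_nonneg) auto
    have pt: "c\<^sup>2 * (cmod (\<epsilon> n))\<^sup>2 \<le> 3 * (cmod (E 0))\<^sup>2 * (cmod (\<phi> n))\<^sup>2
        + 3 * (F * T) * (cmod (\<phi> n))\<^sup>2 + 3 * (cmod \<kappa>)\<^sup>2 * (cmod (u n))\<^sup>2" if "n < N" for n
    proof -
      have "cmod (\<Sum>j<n. f j * \<epsilon> j) \<le> (\<Sum>j<n. cmod (f j) * cmod (\<epsilon> j))"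
        by (rule order_trans[OF norm_sum]) (simp add: norm_mult)
      also have "\<dots> \<le> sqrt (\<Sum>j<n. (cmod (f j))\<^sup>2) * sqrt (\<Sum>j<n. (cmod (\<epsilon> j))\<^sup>2)"
        by (rule cs_fin)
      also have "\<dots> \<le> sqrt F * sqrt T"
      proof (intro mult_mono real_sqrt_le_mono)
        show "(\<Sum>j<n. (cmod (f j))\<^sup>2) \<le> F" unfolding F_def by (intro sum_le_suminf sf) auto
        show "(\<Sum>j<n. (cmod (\<epsilon> j))\<^sup>2) \<le> T" unfolding T_def
          by (rule sum_mono2) (use that in auto)
      qed (use F0 in \<open>auto intro: sum_nonneg\<close>)
      finally have s1: "cmod (\<Sum>j<n. f j * \<epsilon> j) \<le> sqrt F * sqrt T" .
      have En: "cmod (E n) \<le> cmod (E 0) + sqrt F * sqrt T"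
        using Esum[of n] s1 norm_triangle_ineq4[of "E 0" "\<Sum>j<n. f j * \<epsilon> j"] by simp
      have "c * cmod (\<epsilon> n) \<le> cmod (\<epsilon> n) * cmod (P n)"
        using mult_right_mono[OF Pc[of n] norm_ge_zero[of "\<epsilon> n"]] by (simp add: mult.commute)
      also have "\<dots> = cmod (\<phi> n * E n - \<kappa> * u n)"
      proof -
        have e: "\<epsilon> n * P n = \<phi> n * E n - \<kappa> * u n" using idt[of n] by (simp add: algebra_simps)
        show ?thesis by (simp only: norm_mult[symmetric] e)
      qed
      also have "\<dots> \<le> cmod (\<phi> n) * cmod (E n) + cmod \<kappa> * cmod (u n)"
        using norm_triangle_ineq4[of "\<phi> n * E n" "\<kappa> * u n"] by (simp add: norm_mult)
      also have "\<dots> \<le> cmod (\<phi> n) * (cmod (E 0) + sqrt F * sqrt T) + cmod \<kappa> * cmod (u n)"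
        using En by (simp add: mult_left_mono)
      finally have lin: "c * cmod (\<epsilon> n) \<le> cmod (\<phi> n) * cmod (E 0) + cmod (\<phi> n) * (sqrt F * sqrt T)
          + cmod \<kappa> * cmod (u n)" by (simp add: algebra_simps)
      define A where "A = cmod (\<phi> n) * cmod (E 0)"
      define B where "B = cmod (\<phi> n) * (sqrt F * sqrt T)"
      define D where "D = cmod \<kappa> * cmod (u n)"
      have "0 \<le> c * cmod (\<epsilon> n)" using c by simp
      then have "(c * cmod (\<epsilon> n))\<^sup>2 \<le> (A + B + D)\<^sup>2"
        using lin unfolding A_def B_def D_def by (intro power_mono) auto
      also have "\<dots> \<le> 3 * A\<^sup>2 + 3 * B\<^sup>2 + 3 * D\<^sup>2"
        using sum_squares_bound[of A B] sum_squares_bound[of A D] sum_squares_bound[of B D]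
        by (simp add: power2_eq_square algebra_simps)
      also have "B\<^sup>2 = (cmod (\<phi> n))\<^sup>2 * (F * T)"
        unfolding B_def using F0 T0 by (simp add: power_mult_distrib)
      finally show ?thesis unfolding A_def D_def by (simp add: power_mult_distrib algebra_simps)
    qed
    have "c\<^sup>2 * T = (\<Sum>n<N. c\<^sup>2 * (cmod (\<epsilon> n))\<^sup>2)" unfolding T_def by (simp add: sum_distrib_left)
    also have "\<dots> \<le> (\<Sum>n<N. 3 * (cmod (E 0))\<^sup>2 * (cmod (\<phi> n))\<^sup>2
        + 3 * (F * T) * (cmod (\<phi> n))\<^sup>2 + 3 * (cmod \<kappa>)\<^sup>2 * (cmod (u n))\<^sup>2)"
      by (rule sum_mono) (use pt in auto)
    also have "\<dots> = 3 * (cmod (E 0))\<^sup>2 * (\<Sum>n<N. (cmod (\<phi> n))\<^sup>2)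
        + 3 * (F * T) * (\<Sum>n<N. (cmod (\<phi> n))\<^sup>2) + 3 * (cmod \<kappa>)\<^sup>2 * (\<Sum>n<N. (cmod (u n))\<^sup>2)"
      by (simp only: sum.distrib sum_distrib_left)
    also have "\<dots> \<le> 3 * (cmod (E 0))\<^sup>2 * SP + 3 * (F * T) * SP + 3 * (cmod \<kappa>)\<^sup>2 * SU"
    proof (intro add_mono mult_left_mono)
      show "(\<Sum>n<N. (cmod (\<phi> n))\<^sup>2) \<le> SP" unfolding SP_def by (intro sum_le_suminf sp) auto
      show "(\<Sum>n<N. (cmod (\<phi> n))\<^sup>2) \<le> SP" unfolding SP_def by (intro sum_le_suminf sp) auto
      show "(\<Sum>n<N. (cmod (u n))\<^sup>2) \<le> SU" unfolding SU_def by (intro sum_le_suminf su) auto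
    qed (use F0 T0 in auto)
    also have "\<dots> = C + (3 * F * SP) * T" unfolding C_def by (simp add: algebra_simps)
    also have "(3 * F * SP) * T \<le> (c\<^sup>2 / 2) * T"
      using small T0 unfolding F_def[symmetric] SP_def[symmetric] by (intro mult_right_mono) auto
    finally have "c\<^sup>2 * T \<le> C + c\<^sup>2 / 2 * T" by simp
    then have "c\<^sup>2 * T \<le> 2 * C" by simp
    then show ?thesis unfolding T_def[symmetric] using c by (simp add: field_simps)
  qed
  show ?thesis
  proof (rule bounded_imp_summable)
    fix n
    have "(\<Sum>k\<le>n. (cmod (\<epsilon> k))\<^sup>2) = (\<Sum>k<Suc n. (cmod (\<epsilon> k))\<^sup>2)" by (simp add: lessThan_Suc_atMost)
    then show "(\<Sum>k\<le>n. (cmod (\<epsilon> k))\<^sup>2) \<le> 2 * C / c\<^sup>2" using bound[of "Suc n"] by simp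
  qed simp
qed




lemma al:
  fixes u \<phi> \<epsilon> f P E :: "nat \<Rightarrow> complex" and \<kappa> p :: complex
  assumes su: "summable (\<lambda>n. (cmod (u n))\<^sup>2)" and sp: "summable (\<lambda>n. (cmod (\<phi> n))\<^sup>2)"
    and sf: "summable (\<lambda>n. (cmod (f n))\<^sup>2)"
    and P: "P \<longlonglongrightarrow> p" and p: "p \<noteq> 0"
    and E: "\<And>n. E (Suc n) = E n - f n * \<epsilon> n"
    and idt: "\<And>n. \<kappa> * u n = \<phi> n * E n - \<epsilon> n * P n"
  shows "summable (\<lambda>n. (cmod (\<epsilon> n))\<^sup>2)"
proof -
  define c where "c = cmod p / 2"
  have c: "c > 0" using p by (simp add: c_def)
  define SP where "SP = (\<Sum>n. (cmod (\<phi> n))\<^sup>2)"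
  have SP0: "SP \<ge> 0" unfolding SP_def by (intro suminf_nonneg sp) auto
  have "(\<lambda>n. cmod (P n)) \<longlonglongrightarrow> cmod p" by (rule tendsto_norm[OF P])
  moreover have "c < cmod p" using p by (simp add: c_def)
  ultimately have ev1: "eventually (\<lambda>n. c < cmod (P n)) sequentially" by (rule order_tendstoD(1))
  have "(\<lambda>K. \<Sum>k. (cmod (f (k + K)))\<^sup>2) \<longlonglongrightarrow> 0" by (rule suminf_exist_split2[OF sf])
  moreover have "0 < c\<^sup>2 / (6 * (SP + 1))" using c SP0 by simp
  ultimately have ev2: "eventually (\<lambda>K. (\<Sum>k. (cmod (f (k + K)))\<^sup>2) < c\<^sup>2 / (6 * (SP + 1))) sequentially"
    by (rule order_tendstoD(2))
  obtain K where K1: "\<And>n. n \<ge> K \<Longrightarrow> c < cmod (P n)"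
    and K2: "(\<Sum>k. (cmod (f (k + K)))\<^sup>2) < c\<^sup>2 / (6 * (SP + 1))"
  proof -
    obtain K1 where "\<And>n. n \<ge> K1 \<Longrightarrow> c < cmod (P n)" using ev1 by (auto simp: eventually_sequentially)
    moreover obtain K2 where "\<And>n. n \<ge> K2 \<Longrightarrow> (\<Sum>k. (cmod (f (k + n)))\<^sup>2) < c\<^sup>2 / (6 * (SP + 1))"
      using ev2 by (auto simp: eventually_sequentially)
    ultimately show ?thesis using that[of "max K1 K2"] by auto
  qed
  define FK where "FK = (\<Sum>k. (cmod (f (k + K)))\<^sup>2)"
  define SPK where "SPK = (\<Sum>k. (cmod (\<phi> (k + K)))\<^sup>2)"
  have FK0: "FK \<ge> 0" unfolding FK_def by (intro suminf_nonneg summable_ignore_initial_segment sf) auto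
  have SPK0: "SPK \<ge> 0" unfolding SPK_def by (intro suminf_nonneg summable_ignore_initial_segment sp) auto
  have "SP = SPK + (\<Sum>i<K. (cmod (\<phi> i))\<^sup>2)"
    unfolding SP_def SPK_def by (rule suminf_split_initial_segment[OF sp])
  moreover have "(\<Sum>i<K. (cmod (\<phi> i))\<^sup>2) \<ge> 0" by (intro sum_nonneg) auto
  ultimately have "SPK \<le> SP + 1" by linarith
  then have "6 * FK * SPK \<le> 6 * FK * (SP + 1)" using FK0 by (intro mult_left_mono) auto
  also have "\<dots> \<le> c\<^sup>2" using K2 SP0 unfolding FK_def[symmetric] by (simp add: field_simps)
  finally have small: "6 * FK * SPK \<le> c\<^sup>2" .
  have "summable (\<lambda>n. (cmod (\<epsilon> (n + K)))\<^sup>2)"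
  proof (rule al0[where u="\<lambda>n. u (n + K)" and \<phi>="\<lambda>n. \<phi> (n + K)" and f="\<lambda>n. f (n + K)"
        and P="\<lambda>n. P (n + K)" and E="\<lambda>n. E (n + K)" and \<kappa>=\<kappa> and c=c])
    show "summable (\<lambda>n. (cmod (u (n + K)))\<^sup>2)" by (rule summable_ignore_initial_segment[OF su])
    show "summable (\<lambda>n. (cmod (\<phi> (n + K)))\<^sup>2)" by (rule summable_ignore_initial_segment[OF sp])
    show "summable (\<lambda>n. (cmod (f (n + K)))\<^sup>2)" by (rule summable_ignore_initial_segment[OF sf])
    show "6 * (\<Sum>n. (cmod (f (n + K)))\<^sup>2) * (\<Sum>n. (cmod (\<phi> (n + K)))\<^sup>2) \<le> c\<^sup>2"
      using small by (simp add: FK_def SPK_def)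
    show "\<And>n. c \<le> cmod (P (n + K))" using K1 by (simp add: less_imp_le)
    show "\<And>n. E (Suc n + K) = E (n + K) - f (n + K) * \<epsilon> (n + K)" using E by simp
    show "\<And>n. \<kappa> * u (n + K) = \<phi> (n + K) * E (n + K) - \<epsilon> (n + K) * P (n + K)" using idt by simp
  qed (use c in auto)
  then show ?thesis using summable_iff_shift[of "\<lambda>n. (cmod (\<epsilon> n))\<^sup>2" K] by simp
qed

lemma tail_repr:
  fixes X g :: "nat \<Rightarrow> complex"
  assumes X: "X \<longlonglongrightarrow> 0" and d: "\<And>n. X n - X (Suc n) = g n" and g: "summable g"
  shows "X n = (\<Sum>j. g (j + n))"
proof -
  have tel: "X n - X (M + n) = (\<Sum>j<M. g (j + n))" for M
  proof (induction M)
    case (Suc M)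
    have "X n - X (Suc M + n) = (X n - X (M + n)) + (X (M + n) - X (Suc (M + n)))" by simp
    also have "\<dots> = (\<Sum>j<M. g (j + n)) + g (M + n)" using Suc d by simp
    finally show ?case by simp
  qed simp
  have "(\<lambda>M. X n - X (M + n)) \<longlonglongrightarrow> X n - 0"
    by (intro tendsto_diff tendsto_const LIMSEQ_ignore_initial_segment X)
  moreover have "(\<lambda>M. X n - X (M + n)) \<longlonglongrightarrow> (\<Sum>j. g (j + n))"
    unfolding tel by (rule summable_LIMSEQ[OF summable_ignore_initial_segment[OF g]])
  ultimately show ?thesis using LIMSEQ_unique by fastforce
qed

lemma decay:
  fixes \<phi> w R :: "nat \<Rightarrow> complex" and f P \<psi> :: "nat \<Rightarrow> nat \<Rightarrow> complex"
  assumes sp: "summable (\<lambda>n. (cmod (\<phi> n))\<^sup>2)"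
    and sf: "\<And>i. summable (\<lambda>n. (cmod (f i n))\<^sup>2)"
    and \<psi>: "\<And>i n. cmod (\<psi> i n) = cmod (\<phi> n)"
    and P: "\<And>i. P i \<longlonglongrightarrow> 0" and Pd: "\<And>i n. P i n - P i (Suc n) = f i n * \<psi> i n"
    and R: "R \<longlonglongrightarrow> 0" and Rd: "\<And>n. R n - R (Suc n) = 2 * \<i> * of_real ((cmod (\<phi> n))\<^sup>2)"
    and nz: "\<And>n. \<exists>j\<ge>n. \<phi> j \<noteq> 0"
    and wid: "\<And>n. w n * R n = P 1 n * P 2 n - P 3 n * P 4 n"
  shows "w \<longlonglongrightarrow> 0"
proof -
  define \<rho> where "\<rho> n = (\<Sum>j. (cmod (\<phi> (j + n)))\<^sup>2)" for n
  define F where "F i n = (\<Sum>j. (cmod (f i (j + n)))\<^sup>2)" for i n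
  have sps: "summable (\<lambda>j. (cmod (\<phi> (j + n)))\<^sup>2)" for n by (rule summable_ignore_initial_segment[OF sp])
  have sfs: "summable (\<lambda>j. (cmod (f i (j + n)))\<^sup>2)" for i n by (rule summable_ignore_initial_segment[OF sf])
  have s\<psi>: "summable (\<lambda>n. (cmod (\<psi> i n))\<^sup>2)" for i using sp by (simp add: \<psi>)
  have Pb: "cmod (P i n) \<le> sqrt (F i n) * sqrt (\<rho> n)" for i n
  proof -
    have sg: "summable (\<lambda>n. f i n * \<psi> i n)" by (rule prod_summable[OF sf s\<psi>])
    have "P i n = (\<Sum>j. f i (j + n) * \<psi> i (j + n))"
      by (rule tail_repr[OF P Pd sg])
    then have "cmod (P i n) \<le> (\<Sum>j. cmod (f i (j + n) * \<psi> i (j + n)))"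
      using summable_norm[of "\<lambda>j. f i (j + n) * \<psi> i (j + n)"] cs_inf(1)[OF sfs sps]
      by (simp add: norm_mult \<psi>)
    also have "\<dots> = (\<Sum>j. cmod (f i (j + n)) * cmod (\<phi> (j + n)))" by (simp add: norm_mult \<psi>)
    also have "\<dots> \<le> sqrt (F i n) * sqrt (\<rho> n)"
      unfolding F_def \<rho>_def by (rule cs_inf(2)[OF sfs sps])
    finally show ?thesis .
  qed
  have Rr: "R n = 2 * \<i> * of_real (\<rho> n)" for n
  proof -
    have sR: "summable (\<lambda>n. 2 * \<i> * complex_of_real ((cmod (\<phi> n))\<^sup>2))"
      by (intro summable_mult summable_of_real sp)
    have "R n = (\<Sum>j. 2 * \<i> * complex_of_real ((cmod (\<phi> (j + n)))\<^sup>2))"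
      by (rule tail_repr[OF R Rd sR])
    also have "\<dots> = 2 * \<i> * (\<Sum>j. complex_of_real ((cmod (\<phi> (j + n)))\<^sup>2))"
      by (rule suminf_mult) (intro summable_of_real sps)
    also have "(\<Sum>j. complex_of_real ((cmod (\<phi> (j + n)))\<^sup>2)) = of_real (\<rho> n)"
      unfolding \<rho>_def by (rule sums_unique[symmetric]) (intro sums_of_real summable_sums sps)
    finally show ?thesis .
  qed
  have rpos: "\<rho> n > 0" for n
  proof -
    obtain j where "j \<ge> n" "\<phi> j \<noteq> 0" using nz by blast
    then have "0 < (cmod (\<phi> ((j - n) + n)))\<^sup>2" by simp
    then show ?thesis unfolding \<rho>_def using suminf_pos_iff[OF sps[of n]] by auto
  qed
  have bnd: "cmod (w n) \<le> (sqrt (F 1 n) * sqrt (F 2 n) + sqrt (F 3 n) * sqrt (F 4 n)) / 2" for n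
  proof -
    have Fnn: "F i n \<ge> 0" for i unfolding F_def by (intro suminf_nonneg sfs) auto
    have "cmod (w n) * (2 * \<rho> n) = cmod (w n * R n)"
      using rpos[of n] by (simp add: Rr norm_mult)
    also have "\<dots> \<le> cmod (P 1 n) * cmod (P 2 n) + cmod (P 3 n) * cmod (P 4 n)"
      unfolding wid using norm_triangle_ineq4[of "P 1 n * P 2 n" "P 3 n * P 4 n"] by (simp add: norm_mult)
    also have "\<dots> \<le> (sqrt (F 1 n) * sqrt (\<rho> n)) * (sqrt (F 2 n) * sqrt (\<rho> n))
        + (sqrt (F 3 n) * sqrt (\<rho> n)) * (sqrt (F 4 n) * sqrt (\<rho> n))"
      using Fnn rpos[of n] by (intro add_mono mult_mono Pb) (auto intro!: mult_nonneg_nonneg simp: less_imp_le)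
    also have "\<dots> = \<rho> n * (sqrt (F 1 n) * sqrt (F 2 n) + sqrt (F 3 n) * sqrt (F 4 n))"
    proof -
      have "sqrt (\<rho> n) * sqrt (\<rho> n) = \<rho> n" using rpos[of n] by simp
      moreover have gen: "\<And>x1 x2 x3 x4 t :: real. x1 * t * (x2 * t) + x3 * t * (x4 * t) = (t * t) * (x1 * x2 + x3 * x4)"
        by (simp add: algebra_simps)
      ultimately show ?thesis by (simp only: gen)
    qed
    finally have "cmod (w n) * (2 * \<rho> n) \<le> \<rho> n * (sqrt (F 1 n) * sqrt (F 2 n) + sqrt (F 3 n) * sqrt (F 4 n))" .
    then have "\<rho> n * (2 * cmod (w n)) \<le> \<rho> n * (sqrt (F 1 n) * sqrt (F 2 n) + sqrt (F 3 n) * sqrt (F 4 n))"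
      by (simp only: mult_ac)
    then have "2 * cmod (w n) \<le> sqrt (F 1 n) * sqrt (F 2 n) + sqrt (F 3 n) * sqrt (F 4 n)"
      using rpos[of n] by (rule mult_left_le_imp_le)
    then show ?thesis by simp
  qed
  have Ft: "(\<lambda>n. F i n) \<longlonglongrightarrow> 0" for i
    unfolding F_def by (rule suminf_exist_split2[OF sf])
  have "(\<lambda>n. (sqrt (F 1 n) * sqrt (F 2 n) + sqrt (F 3 n) * sqrt (F 4 n)) / 2) \<longlonglongrightarrow>
      (sqrt 0 * sqrt 0 + sqrt 0 * sqrt 0) / 2"
    by (intro tendsto_intros Ft) auto
  then have "(\<lambda>n. (sqrt (F 1 n) * sqrt (F 2 n) + sqrt (F 3 n) * sqrt (F 4 n)) / 2) \<longlonglongrightarrow> 0" by simp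
  then show ?thesis by (rule Lim_null_comparison[rotated]) (use bnd in auto)
qed




fun epsn :: "(int \<Rightarrow> real) \<Rightarrow> (int \<Rightarrow> real) \<Rightarrow> nat \<Rightarrow> complex" where
  "epsn a b 0 = 0"
| "epsn a b (Suc 0) = 1"
| "epsn a b (Suc (Suc n)) = ((\<i> - of_real (b (- int n - 1))) * epsn a b (Suc n)
      - of_real (a (- int n - 1)) * epsn a b n) / of_real (a (- int n - 2))"

lemma l2_nat_restrict:
  assumes "v \<in> l2" "inj h"
  shows "summable (\<lambda>j. (cmod (v (h j)))\<^sup>2)"
proof -
  have "(\<lambda>k. (cmod (v k))\<^sup>2) summable_on range h"
    using assms(1) unfolding l2_iff by (rule summable_on_subset) auto
  then have "((\<lambda>k. (cmod (v k))\<^sup>2) \<circ> h) summable_on UNIV"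
    using summable_on_reindex[OF assms(2)] by auto
  then show ?thesis
    by (subst summable_on_UNIV_nonneg_real_iff[symmetric]) (auto simp: o_def)
qed

lemma inj_neg: "inj (\<lambda>j::nat. - int j - 1)"
  by (auto simp: inj_def)

lemma l2_neg: "v \<in> l2 \<Longrightarrow> summable (\<lambda>j. (cmod (v (- int j - 1)))\<^sup>2)"
  using l2_nat_restrict[OF _ inj_neg] by blast

lemma summable_l2_nat: "summable (\<lambda>j. (cmod (w j))\<^sup>2) \<Longrightarrow> (w :: nat \<Rightarrow> complex) \<in> l2"
  unfolding l2_iff by (subst summable_on_UNIV_nonneg_real_iff) auto

lemma idx1: "- int (Suc n) - 1 = - int n - 1 - 1" by simp

lemma Dstar_cnj: "u \<in> Dstar a b \<Longrightarrow> (\<lambda>k. cnj (u k)) \<in> Dstar a b"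
  by (simp add: Dstar_def Lact_cnj l2_cnj)

locale jac =
  fixes a b :: "int \<Rightarrow> real" and Pp Pm :: "int \<Rightarrow> complex"
  assumes apos: "\<And>k. a k > 0"
    and Jm: "def_indices_00 (Jminus a b) fin_seq"
    and Pp_l2: "Pp \<in> l2"
    and Pp_eig: "Lact a b Pp = (\<lambda>k. \<i> * Pp k)"
    and Pm_eig: "Lact a b Pm = (\<lambda>k. - \<i> * Pm k)"
    and conj: "\<And>k. cnj (Pp k) = Pm k"
    and Pp_nz: "Pp \<noteq> (\<lambda>k. 0)"

context jac
begin

definition "epsz k = epsn a b (nat (- k))"

lemma epsz_eq: "k \<le> -1 \<Longrightarrow> Lact a b epsz k = \<i> * epsz k"
proof -
  assume "k \<le> -1"
  define n where "n = nat (- k - 1)"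
  have k: "k = - int n - 1" using \<open>k \<le> -1\<close> by (simp add: n_def)
  have an: "complex_of_real (a (- int n - 2)) \<noteq> 0" using apos[of "- int n - 2"] by simp
  have e1: "nat (- (k + 1)) = n" "nat (- k) = Suc n" "nat (- (k - 1)) = Suc (Suc n)"
    using k by simp_all
  have "Lact a b epsz k = of_real (a k) * epsn a b n + of_real (b k) * epsn a b (Suc n)
      + of_real (a (k - 1)) * epsn a b (Suc (Suc n))"
    unfolding Lact_def epsz_def by (simp only: e1)
  also have "\<dots> = \<i> * epsn a b (Suc n)"
    unfolding k using an by (simp add: field_simps)
  also have "epsn a b (Suc n) = epsz k" unfolding epsz_def by (simp only: e1)
  finally show ?thesis .
qed

lemma eps_not_l2: "\<not> summable (\<lambda>j. (cmod (epsz (- int j - 1)))\<^sup>2)"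
proof
  assume "summable (\<lambda>j. (cmod (epsz (- int j - 1)))\<^sup>2)"
  then have "(\<lambda>j::nat. epsz (- int j - 1)) \<in> l2" by (rule summable_l2_nat)
  then have "epsz (- int 0 - 1) = 0"
    by (intro eig_half[OF Jm, of epsz]) (auto simp: epsz_eq epsz_def)
  then show False by (simp add: epsz_def)
qed

lemma Pp_two_zero:
  assumes "Pp m = 0" "Pp (m + 1) = 0" shows False
proof -
  have "Pp k = 0" for k by (rule sol_unique[OF apos Pp_eig assms])
  then show False using Pp_nz by auto
qed

lemma Dstar_l2: "u \<in> Dstar a b \<Longrightarrow> u \<in> l2" by (simp add: Dstar_def)
lemma Dstar_Ll2: "u \<in> Dstar a b \<Longrightarrow> Lact a b u \<in> l2" by (simp add: Dstar_def)

lemma Pp_Dstar: "Pp \<in> Dstar a b"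
  using Pp_l2 by (simp add: Dstar_def Pp_eig l2_scale)

lemma Pm_is: "Pm = (\<lambda>k. cnj (Pp k))" using conj by auto

lemma Pm_Dstar: "Pm \<in> Dstar a b"
  unfolding Pm_is by (rule Dstar_cnj[OF Pp_Dstar])

lemma wr_Pp_decay:
  assumes u: "u \<in> Dstar a b"
  shows "(\<lambda>N. wronskian a u Pp (- int N)) \<longlonglongrightarrow> 0"
proof -
  define f where "f k = Lact a b u k - \<i> * u k" for k
  have fl2: "f \<in> l2" unfolding f_def using u
    by (intro l2_diff l2_scale) (simp_all add: Dstar_def)
  define u' where "u' n = u (- int n - 1)" for n
  define \<phi> where "\<phi> n = Pp (- int n - 1)" for n
  define \<epsilon> where "\<epsilon> n = epsz (- int n - 1)" for n
  define f' where "f' n = f (- int n - 1)" for n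
  define P where "P n = wronskian a u Pp (- int n - 1)" for n
  define E where "E n = wronskian a u epsz (- int n - 1)" for n
  define \<kappa> where "\<kappa> = wronskian a Pp epsz (- 1)"
  have su: "summable (\<lambda>n. (cmod (u' n))\<^sup>2)" unfolding u'_def by (rule l2_neg) (simp add: Dstar_l2 u)
  have sp: "summable (\<lambda>n. (cmod (\<phi> n))\<^sup>2)" unfolding \<phi>_def by (rule l2_neg[OF Pp_l2])
  have sf: "summable (\<lambda>n. (cmod (f' n))\<^sup>2)" unfolding f'_def by (rule l2_neg[OF fl2])
  have Ed: "E (Suc n) = E n - f' n * \<epsilon> n" for n
  proof -
    have "wronskian a u epsz (- int n - 1) - wronskian a u epsz (- int n - 1 - 1) =
        Lact a b u (- int n - 1) * epsz (- int n - 1) - u (- int n - 1) * Lact a b epsz (- int n - 1)"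
      by (rule wr_step)
    then show ?thesis unfolding E_def f'_def \<epsilon>_def f_def idx1 using epsz_eq[of "- int n - 1"]
      by (simp add: algebra_simps)
  qed
  have Pd: "P n - P (Suc n) = f' n * \<phi> n" for n
  proof -
    have "wronskian a u Pp (- int n - 1) - wronskian a u Pp (- int n - 1 - 1) =
        Lact a b u (- int n - 1) * Pp (- int n - 1) - u (- int n - 1) * Lact a b Pp (- int n - 1)"
      by (rule wr_step)
    then show ?thesis unfolding P_def f'_def \<phi>_def f_def idx1 Pp_eig
      by (simp add: algebra_simps)
  qed
  have kap: "wronskian a Pp epsz (- int n - 1) = \<kappa>" for n
  proof (induction n)
    case 0 then show ?case by (simp add: \<kappa>_def)
  next
    case (Suc n)
    have "wronskian a Pp epsz (- int n - 1) - wronskian a Pp epsz (- int n - 1 - 1) =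
        Lact a b Pp (- int n - 1) * epsz (- int n - 1) - Pp (- int n - 1) * Lact a b epsz (- int n - 1)"
      by (rule wr_step)
    then show ?case using Suc epsz_eq[of "- int n - 1"] unfolding idx1 Pp_eig by simp
  qed
  have idt: "\<kappa> * u' n = \<phi> n * E n - \<epsilon> n * P n" for n
  proof -
    have "u (- int n - 1) * wronskian a Pp epsz (- int n - 1) =
        Pp (- int n - 1) * wronskian a u epsz (- int n - 1) - epsz (- int n - 1) * wronskian a u Pp (- int n - 1)"
      unfolding wronskian_def by algebra
    then show ?thesis unfolding kap u'_def \<phi>_def E_def \<epsilon>_def P_def by (simp add: mult.commute)
  qed
  have sg: "summable (\<lambda>n. f' n * \<phi> n)" by (rule prod_summable[OF sf sp])
  have Pn: "P n = P 0 - (\<Sum>j<n. f' j * \<phi> j)" for n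
  proof (induction n)
    case (Suc n)
    have "P (Suc n) = P n - (P n - P (Suc n))" by simp
    also have "\<dots> = P n - f' n * \<phi> n" by (simp only: Pd)
    also have "\<dots> = (P 0 - (\<Sum>j<n. f' j * \<phi> j)) - f' n * \<phi> n" by (simp only: Suc.IH)
    also have "\<dots> = P 0 - (\<Sum>j<Suc n. f' j * \<phi> j)" by (simp only: sum.lessThan_Suc diff_diff_eq)
    finally show ?case .
  qed simp
  have Pconv0: "(\<lambda>n. P 0 - (\<Sum>j<n. f' j * \<phi> j)) \<longlonglongrightarrow> P 0 - (\<Sum>j. f' j * \<phi> j)"
    by (intro tendsto_diff tendsto_const summable_LIMSEQ sg)
  have "(\<lambda>n. P 0 - (\<Sum>j<n. f' j * \<phi> j)) = P" by (rule ext) (rule Pn[symmetric])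
  with Pconv0 have Pconv: "P \<longlonglongrightarrow> P 0 - (\<Sum>j. f' j * \<phi> j)" by simp
  have "P 0 - (\<Sum>j. f' j * \<phi> j) = 0"
  proof (rule ccontr)
    assume "P 0 - (\<Sum>j. f' j * \<phi> j) \<noteq> 0"
    from al[OF su sp sf Pconv this Ed idt] show False
      using eps_not_l2 unfolding \<epsilon>_def by blast
  qed
  then have "P \<longlonglongrightarrow> 0" using Pconv by simp
  moreover have "(\<lambda>n. wronskian a u Pp (- int (Suc n))) = P"
  proof -
    have e: "\<And>n. - int (Suc n) = - int n - 1" by simp
    show ?thesis by (simp only: e) (rule ext, simp only: P_def)
  qed
  ultimately have "(\<lambda>n. wronskian a u Pp (- int (Suc n))) \<longlonglongrightarrow> 0" by simp
  then show ?thesis by (rule LIMSEQ_imp_Suc)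
qed

end



lemma neg_shift1: "(\<lambda>N. g (- int N)) \<longlonglongrightarrow> l \<Longrightarrow> (\<lambda>n. g (- int n - 1)) \<longlonglongrightarrow> l"
proof -
  assume "(\<lambda>N. g (- int N)) \<longlonglongrightarrow> l"
  then have "(\<lambda>n. g (- int (Suc n))) \<longlonglongrightarrow> l" by (rule LIMSEQ_Suc)
  moreover have "(\<lambda>n. g (- int (Suc n))) = (\<lambda>n. g (- int n - 1))"
  proof -
    have e: "\<And>n. - int (Suc n) = - int n - 1" by simp
    show ?thesis by (simp only: e)
  qed
  ultimately show ?thesis by simp
qed

lemma neg_shift2: "(\<lambda>n. g (- int n - 1)) \<longlonglongrightarrow> l \<Longrightarrow> (\<lambda>N. g (- int N)) \<longlonglongrightarrow> l"
proof -
  assume a: "(\<lambda>n. g (- int n - 1)) \<longlonglongrightarrow> l"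
  have "(\<lambda>n. g (- int (Suc n))) = (\<lambda>n. g (- int n - 1))"
  proof -
    have e: "\<And>n. - int (Suc n) = - int n - 1" by simp
    show ?thesis by (simp only: e)
  qed
  with a have "(\<lambda>n. g (- int (Suc n))) \<longlonglongrightarrow> l" by simp
  then show ?thesis by (rule LIMSEQ_imp_Suc)
qed

lemma wr_step_eig:
  assumes "Lact a b y = (\<lambda>k. c * y k)"
  shows "wronskian a x y k - wronskian a x y (k - 1) = (Lact a b x k - c * x k) * y k"
proof -
  have "wronskian a x y k - wronskian a x y (k - 1) = Lact a b x k * y k - x k * Lact a b y k"
    by (rule wr_step)
  also have "\<dots> = Lact a b x k * y k - x k * (c * y k)" by (simp add: assms)
  also have "\<dots> = (Lact a b x k - c * x k) * y k" by (simp add: algebra_simps)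
  finally show ?thesis .
qed

lemma finite_int_bound:
  assumes "finite (X :: int set)"
  obtains M :: nat where "\<And>k. k \<in> X \<Longrightarrow> \<bar>k\<bar> \<le> int M"
proof -
  have "finite ((\<lambda>k. nat \<bar>k\<bar>) ` X)" using assms by simp
  then obtain M where M: "\<forall>n\<in>(\<lambda>k. nat \<bar>k\<bar>) ` X. n \<le> M"
    using finite_nat_set_iff_bounded_le by blast
  show ?thesis
  proof (rule that[of M])
    fix k assume "k \<in> X"
    then have "nat \<bar>k\<bar> \<le> M" using M by blast
    then show "\<bar>k\<bar> \<le> int M" by linarith
  qed
qed

lemma infsum_sym_limit:
  fixes g :: "int \<Rightarrow> complex"
  assumes "g summable_on UNIV"
  shows "(\<lambda>N. \<Sum>k\<in>{- int N..int N}. g k) \<longlonglongrightarrow> infsum g UNIV"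
proof -
  have hs: "(sum g \<longlongrightarrow> infsum g UNIV) (finite_subsets_at_top UNIV)"
    using has_sum_infsum[OF assms] unfolding has_sum_def .
  have fl: "filterlim (\<lambda>N::nat. {- int N..int N}) (finite_subsets_at_top UNIV) sequentially"
    unfolding filterlim_finite_subsets_at_top
  proof (intro allI impI)
    fix X :: "int set" assume "finite X \<and> X \<subseteq> UNIV"
    then obtain M :: nat where M: "\<And>k. k \<in> X \<Longrightarrow> \<bar>k\<bar> \<le> int M" using finite_int_bound by blast
    show "\<forall>\<^sub>F N in sequentially. finite {- int N..int N} \<and> X \<subseteq> {- int N..int N} \<and> {- int N..int N} \<subseteq> UNIV"
      unfolding eventually_sequentially
    proof (intro exI allI impI)
      fix N assume "M \<le> N"
      then show "finite {- int N..int N} \<and> X \<subseteq> {- int N..int N} \<and> {- int N..int N} \<subseteq> UNIV"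
        using M by force
    qed
  qed
  show ?thesis by (rule filterlim_compose[OF hs fl])
qed

context jac
begin

lemma Pm_abs: "cmod (Pm k) = cmod (Pp k)"
  using conj[of k] by (metis complex_mod_cnj)

lemma Lm_l2: "u \<in> Dstar a b \<Longrightarrow> (\<lambda>k. Lact a b u k - c * u k) \<in> l2"
  by (intro l2_diff l2_scale) (simp_all add: Dstar_def)

lemma Lp_l2: "u \<in> Dstar a b \<Longrightarrow> (\<lambda>k. Lact a b u k + c * u k) \<in> l2"
  by (intro l2_add l2_scale) (simp_all add: Dstar_def)

lemma wr_Pm_decay:
  assumes u: "u \<in> Dstar a b"
  shows "(\<lambda>N. wronskian a u Pm (- int N)) \<longlonglongrightarrow> 0"
proof -
  have "(\<lambda>N. wronskian a (\<lambda>k. cnj (u k)) Pp (- int N)) \<longlonglongrightarrow> 0"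
    by (rule wr_Pp_decay[OF Dstar_cnj[OF u]])
  then have "(\<lambda>N. cnj (wronskian a (\<lambda>k. cnj (u k)) Pp (- int N))) \<longlonglongrightarrow> cnj 0"
    by (rule tendsto_cnj)
  moreover have "\<And>N. cnj (wronskian a (\<lambda>k. cnj (u k)) Pp (- int N)) = wronskian a u Pm (- int N)"
    by (simp add: wronskian_def conj[symmetric])
  ultimately show ?thesis by simp
qed

lemma wr_decay:
  assumes u: "u \<in> Dstar a b" and v: "v \<in> Dstar a b"
  shows "(\<lambda>N. wronskian a u v (- int N)) \<longlonglongrightarrow> 0"
proof -
  define sh :: "(int \<Rightarrow> complex) \<Rightarrow> nat \<Rightarrow> complex" where "sh g n = g (- int n - 1)" for g n
  define F1 where "F1 = (\<lambda>k. Lact a b u k - \<i> * u k)"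
  define F2 where "F2 = (\<lambda>k. Lact a b v k + \<i> * v k)"
  define F3 where "F3 = (\<lambda>k. Lact a b u k + \<i> * u k)"
  define F4 where "F4 = (\<lambda>k. Lact a b v k - \<i> * v k)"
  define f where "f i = (if i = 1 then sh F1 else if i = 2 then sh F2 else if i = 3 then sh F3 else sh F4)" for i :: nat
  define \<psi> where "\<psi> i = (if i = 1 then sh Pp else if i = 2 then sh Pm else if i = 3 then sh Pm else sh Pp)" for i :: nat
  define P where "P i = (if i = 1 then sh (wronskian a u Pp) else if i = 2 then sh (wronskian a v Pm)
      else if i = 3 then sh (wronskian a u Pm) else sh (wronskian a v Pp))" for i :: nat
  define R where "R = sh (wronskian a Pp Pm)"
  define w where "w = sh (wronskian a u v)"
  have sp: "summable (\<lambda>n. (cmod (sh Pp n))\<^sup>2)" unfolding sh_def by (rule l2_neg[OF Pp_l2])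
  have sF: "summable (\<lambda>n. (cmod (sh F n))\<^sup>2)" if "F \<in> l2" for F unfolding sh_def by (rule l2_neg[OF that])
  have sf: "summable (\<lambda>n. (cmod (f i n))\<^sup>2)" for i
    unfolding f_def F1_def F2_def F3_def F4_def using u v by (auto intro!: sF Lm_l2 Lp_l2)
  have \<psi>a: "cmod (\<psi> i n) = cmod (sh Pp n)" for i n
    unfolding \<psi>_def sh_def by (auto simp: Pm_abs)
  have tP: "(\<lambda>N. wronskian a x Pp (- int N)) \<longlonglongrightarrow> 0" if "x \<in> Dstar a b" for x
    by (rule wr_Pp_decay[OF that])
  have tM: "(\<lambda>N. wronskian a x Pm (- int N)) \<longlonglongrightarrow> 0" if "x \<in> Dstar a b" for x
    by (rule wr_Pm_decay[OF that])
  have Pt: "P i \<longlonglongrightarrow> 0" for i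
    unfolding P_def sh_def using neg_shift1[OF tP[OF u]] neg_shift1[OF tP[OF v]]
      neg_shift1[OF tM[OF u]] neg_shift1[OF tM[OF v]] by auto
  have dP: "sh (wronskian a x Pp) n - sh (wronskian a x Pp) (Suc n) = sh (\<lambda>k. Lact a b x k - \<i> * x k) n * sh Pp n" for x n
    unfolding sh_def idx1 by (rule wr_step_eig[OF Pp_eig])
  have Pm_eig': "Lact a b Pm = (\<lambda>k. (- \<i>) * Pm k)" using Pm_eig by simp
  have dM: "sh (wronskian a x Pm) n - sh (wronskian a x Pm) (Suc n) = sh (\<lambda>k. Lact a b x k + \<i> * x k) n * sh Pm n" for x n
    unfolding sh_def idx1 using wr_step_eig[OF Pm_eig', of x "- int n - 1"] by simp
  have Pd: "P i n - P i (Suc n) = f i n * \<psi> i n" for i n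
    unfolding P_def f_def \<psi>_def F1_def F2_def F3_def F4_def using dP dM by auto
  have Rt: "R \<longlonglongrightarrow> 0"
  proof -
    have "(\<lambda>N. - wronskian a Pm Pp (- int N)) \<longlonglongrightarrow> - 0"
      by (intro tendsto_minus tP Pm_Dstar)
    then have "(\<lambda>N. wronskian a Pp Pm (- int N)) \<longlonglongrightarrow> 0"
      using wr_antisym[of a Pp Pm] by simp
    then show ?thesis unfolding R_def sh_def by (rule neg_shift1)
  qed
  have Rd: "R n - R (Suc n) = 2 * \<i> * of_real ((cmod (sh Pp n))\<^sup>2)" for n
  proof -
    have "R n - R (Suc n) = (Lact a b Pp (- int n - 1) - (- \<i>) * Pp (- int n - 1)) * Pm (- int n - 1)"
      unfolding R_def sh_def idx1 by (rule wr_step_eig[OF Pm_eig'])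
    also have "\<dots> = 2 * \<i> * (Pp (- int n - 1) * cnj (Pp (- int n - 1)))"
      by (simp add: Pp_eig conj)
    also have "Pp (- int n - 1) * cnj (Pp (- int n - 1)) = of_real ((cmod (sh Pp n))\<^sup>2)"
      unfolding sh_def by (rule complex_norm_square[symmetric])
    finally show ?thesis .
  qed
  have nz: "\<exists>j\<ge>n. sh Pp j \<noteq> 0" for n
  proof (rule ccontr)
    assume "\<not> (\<exists>j\<ge>n. sh Pp j \<noteq> 0)"
    then have "sh Pp (Suc n) = 0" "sh Pp n = 0" by auto
    then have z: "Pp (- int (Suc n) - 1) = 0" "Pp (- int n - 1) = 0" unfolding sh_def by simp_all
    have e: "- int (Suc n) - 1 + 1 = - int n - 1" by simp
    show False by (rule Pp_two_zero[of "- int (Suc n) - 1"]) (simp_all only: e z)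
  qed
  have p1: "P 1 n = wronskian a u Pp (- int n - 1)" for n by (simp add: P_def sh_def)
  have p2: "P 2 n = wronskian a v Pm (- int n - 1)" for n by (simp add: P_def sh_def)
  have p3: "P 3 n = wronskian a u Pm (- int n - 1)" for n by (simp add: P_def sh_def)
  have p4: "P 4 n = wronskian a v Pp (- int n - 1)" for n by (simp add: P_def sh_def)
  have wid: "w n * R n = P 1 n * P 2 n - P 3 n * P 4 n" for n
    unfolding w_def R_def p1 p2 p3 p4 sh_def by (rule wr_plucker)
  have "w \<longlonglongrightarrow> 0"
    by (rule decay[OF sp sf \<psi>a Pt Pd Rt Rd nz wid])
  then show ?thesis unfolding w_def sh_def by (rule neg_shift2)
qed

definition bnd :: "(int \<Rightarrow> complex) \<Rightarrow> (int \<Rightarrow> complex) \<Rightarrow> complex" where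
  "bnd u v = infsum (\<lambda>k. Lact a b u k * v k - u k * Lact a b v k) UNIV"

lemma bnd_summable:
  assumes u: "u \<in> Dstar a b" and v: "v \<in> Dstar a b"
  shows "(\<lambda>k. Lact a b u k * v k - u k * Lact a b v k) summable_on UNIV"
proof -
  have "(\<lambda>k. Lact a b u k * v k + u k * (- Lact a b v k)) summable_on UNIV"
    using u v by (intro summable_on_add l2_prod_summable) (auto simp: Dstar_def intro: l2_scale[of _ "-1", simplified])
  then show ?thesis by simp
qed

lemma Wlim:
  assumes u: "u \<in> Dstar a b" and v: "v \<in> Dstar a b"
  shows "(\<lambda>N. wronskian a u v (int N)) \<longlonglongrightarrow> bnd u v"
proof -
  define g where "g k = Lact a b u k * v k - u k * Lact a b v k" for k
  have S: "(\<lambda>N. \<Sum>k\<in>{- int N..int N}. g k) \<longlonglongrightarrow> bnd u v"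
    unfolding bnd_def g_def by (rule infsum_sym_limit[OF bnd_summable[OF u v]])
  have eq: "(\<Sum>k\<in>{- int N..int N}. g k) = wronskian a u v (int N) - wronskian a u v (- int N - 1)" for N
  proof -
    have "{- int N..int N} = {- int N..- int N + int (2 * N)}" by simp
    then have "(\<Sum>k\<in>{- int N..int N}. g k) = (\<Sum>j\<le>2 * N. g (- int N + int j))"
      by (simp only: sum_int_interval)
    also have "\<dots> = wronskian a u v (- int N + int (2 * N)) - wronskian a u v (- int N - 1)"
      unfolding g_def by (rule green_int)
    also have "- int N + int (2 * N) = int N" by simp
    finally show ?thesis .
  qed
  have "(\<lambda>N. (\<Sum>k\<in>{- int N..int N}. g k) + wronskian a u v (- int N - 1)) \<longlonglongrightarrow> bnd u v + 0"
    by (intro tendsto_add S neg_shift1 wr_decay u v)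
  then show ?thesis unfolding eq by simp
qed

lemma green:
  assumes u: "u \<in> Dstar a b" and v: "v \<in> Dstar a b"
  shows "l2_inner (Lact a b u) v - l2_inner u (Lact a b v) = bnd (\<lambda>k. cnj (u k)) v"
proof -
  have s1: "(\<lambda>k. cnj (Lact a b u k) * v k) summable_on UNIV"
    using u v by (intro l2_prod_summable l2_cnj) (auto simp: Dstar_def)
  have s2: "(\<lambda>k. cnj (u k) * Lact a b v k) summable_on UNIV"
    using u v by (intro l2_prod_summable l2_cnj) (auto simp: Dstar_def)
  have "l2_inner (Lact a b u) v - l2_inner u (Lact a b v) =
      infsum (\<lambda>k. cnj (Lact a b u k) * v k) UNIV + infsum (\<lambda>k. - (cnj (u k) * Lact a b v k)) UNIV"
    unfolding l2_inner_def by (simp add: infsum_uminus)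
  also have "\<dots> = infsum (\<lambda>k. cnj (Lact a b u k) * v k + - (cnj (u k) * Lact a b v k)) UNIV"
    by (rule infsum_add[symmetric]) (use s1 summable_on_uminus[of "\<lambda>k. cnj (u k) * Lact a b v k", THEN iffD2, OF s2] in auto)
  also have "\<dots> = bnd (\<lambda>k. cnj (u k)) v"
    unfolding bnd_def Lact_cnj by simp
  finally show ?thesis .
qed

end



lemma Dstar_lin:
  assumes "x \<in> Dstar a b" "y \<in> Dstar a b"
  shows "(\<lambda>k. c * x k + d * y k) \<in> Dstar a b"
  using assms by (simp add: Dstar_def Lact_lin l2_add l2_scale)

lemma fin_Dstar:
  assumes u: "u \<in> fin_seq"
  shows "u \<in> Dstar a b"
proof -
  obtain M :: nat where M: "\<And>k. \<bar>k\<bar> > int M \<Longrightarrow> u k = 0"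
    using fin_support_bound[OF u] by blast
  have "{k. Lact a b u k \<noteq> 0} \<subseteq> {- int M - 1..int M + 1}"
  proof
    fix k assume k: "k \<in> {k. Lact a b u k \<noteq> 0}"
    show "k \<in> {- int M - 1..int M + 1}"
    proof (rule ccontr)
      assume "k \<notin> {- int M - 1..int M + 1}"
      then have "u k = 0" "u (k + 1) = 0" "u (k - 1) = 0" using M by auto
      then show False using k by (simp add: Lact_def)
    qed
  qed
  then have "Lact a b u \<in> fin_seq" unfolding fin_seq_def by (auto intro: finite_subset)
  then show ?thesis using u by (simp add: Dstar_def fin_seq_l2)
qed

lemma fin_wr_eventually:
  assumes u: "u \<in> fin_seq"
  shows "(\<lambda>N. wronskian a u v (int N)) \<longlonglongrightarrow> 0"
proof -
  obtain M :: nat where M: "\<And>k. \<bar>k\<bar> > int M \<Longrightarrow> u k = 0"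
    using fin_support_bound[OF u] by blast
  have "\<forall>\<^sub>F N in sequentially. wronskian a u v (int N) = 0"
    unfolding eventually_sequentially
  proof (intro exI allI impI)
    fix N assume "Suc M \<le> N"
    then have "u (int N) = 0" "u (int N + 1) = 0" using M by auto
    then show "wronskian a u v (int N) = 0" by (simp add: wronskian_def)
  qed
  then show ?thesis by (rule tendsto_eventually)
qed

lemma alg_sym:
  fixes E E' x1c y1c x2 y2 :: complex
  assumes "E * E' = 1" "E * x2 + E' * y2 = 0" "E' * x1c + E * y1c = 0"
  shows "y1c * y2 - x1c * x2 = 0"
  using assms by algebra

locale jac2 = jac +
  assumes Pp_norm: "l2_norm Pp = 1"

context jac2
begin

lemma bnd_unique:
  assumes "u \<in> Dstar a b" "v \<in> Dstar a b" "(\<lambda>N. wronskian a u v (int N)) \<longlonglongrightarrow> L"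
  shows "bnd u v = L"
  using Wlim[OF assms(1,2)] assms(3) LIMSEQ_unique by blast

lemma bnd_antisym:
  assumes "u \<in> Dstar a b" "v \<in> Dstar a b"
  shows "bnd u v = - bnd v u"
proof (rule bnd_unique[OF assms])
  have "(\<lambda>N. - wronskian a v u (int N)) \<longlonglongrightarrow> - bnd v u" by (intro tendsto_minus Wlim assms)
  then show "(\<lambda>N. wronskian a u v (int N)) \<longlonglongrightarrow> - bnd v u" using wr_antisym[of a v u] by simp
qed

lemma bnd_lin2:
  assumes "u \<in> Dstar a b" "v1 \<in> Dstar a b" "v2 \<in> Dstar a b"
  shows "bnd u (\<lambda>k. c * v1 k + d * v2 k) = c * bnd u v1 + d * bnd u v2"
proof (rule bnd_unique[OF assms(1) Dstar_lin[OF assms(2,3)]])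
  have "(\<lambda>N. c * wronskian a u v1 (int N) + d * wronskian a u v2 (int N)) \<longlonglongrightarrow> c * bnd u v1 + d * bnd u v2"
    by (intro tendsto_intros Wlim assms)
  then show "(\<lambda>N. wronskian a u (\<lambda>k. c * v1 k + d * v2 k) (int N)) \<longlonglongrightarrow> c * bnd u v1 + d * bnd u v2"
    by (simp add: wr_lin2)
qed

lemma bnd_cnj:
  assumes "u \<in> Dstar a b" "v \<in> Dstar a b"
  shows "bnd (\<lambda>k. cnj (u k)) (\<lambda>k. cnj (v k)) = cnj (bnd u v)"
proof (rule bnd_unique[OF Dstar_cnj[OF assms(1)] Dstar_cnj[OF assms(2)]])
  have "(\<lambda>N. cnj (wronskian a u v (int N))) \<longlonglongrightarrow> cnj (bnd u v)" by (intro tendsto_cnj Wlim assms)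
  then show "(\<lambda>N. wronskian a (\<lambda>k. cnj (u k)) (\<lambda>k. cnj (v k)) (int N)) \<longlonglongrightarrow> cnj (bnd u v)"
    by (simp add: wr_cnj)
qed

lemma bnd_plucker:
  assumes "u \<in> Dstar a b" "f \<in> Dstar a b"
  shows "bnd u f * bnd Pp Pm = bnd u Pp * bnd f Pm - bnd u Pm * bnd f Pp"
proof -
  have "(\<lambda>N. wronskian a u f (int N) * wronskian a Pp Pm (int N)) \<longlonglongrightarrow> bnd u f * bnd Pp Pm"
    by (intro tendsto_mult Wlim assms Pp_Dstar Pm_Dstar)
  moreover have "(\<lambda>N. wronskian a u Pp (int N) * wronskian a f Pm (int N) - wronskian a u Pm (int N) * wronskian a f Pp (int N))
      \<longlonglongrightarrow> bnd u Pp * bnd f Pm - bnd u Pm * bnd f Pp"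
    by (intro tendsto_intros Wlim assms Pp_Dstar Pm_Dstar)
  moreover have "\<And>N. wronskian a u f (int N) * wronskian a Pp Pm (int N) =
      wronskian a u Pp (int N) * wronskian a f Pm (int N) - wronskian a u Pm (int N) * wronskian a f Pp (int N)"
    by (rule wr_plucker)
  ultimately have "(\<lambda>N. wronskian a u f (int N) * wronskian a Pp Pm (int N)) \<longlonglongrightarrow> bnd u Pp * bnd f Pm - bnd u Pm * bnd f Pp"
    by simp
  with \<open>(\<lambda>N. wronskian a u f (int N) * wronskian a Pp Pm (int N)) \<longlonglongrightarrow> bnd u f * bnd Pp Pm\<close>
  show ?thesis by (rule LIMSEQ_unique)
qed

lemma norm_sq: "infsum (\<lambda>k. (cmod (Pp k))\<^sup>2) UNIV = 1"
  using Pp_norm unfolding l2_norm_def by simp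

lemma bnd_PpPm: "bnd Pp Pm = 2 * \<i>"
proof -
  have s: "(\<lambda>k. (cmod (Pp k))\<^sup>2) summable_on UNIV" using Pp_l2 by (simp add: l2_iff)
  have "bnd Pp Pm = infsum (\<lambda>k. 2 * \<i> * of_real ((cmod (Pp k))\<^sup>2)) UNIV"
  proof -
    have "\<And>k. Lact a b Pp k * Pm k - Pp k * Lact a b Pm k = 2 * \<i> * of_real ((cmod (Pp k))\<^sup>2)"
    proof -
      fix k
      have "Lact a b Pp k * Pm k - Pp k * Lact a b Pm k = 2 * \<i> * (Pp k * Pm k)"
        by (simp add: Pp_eig Pm_eig algebra_simps)
      also have "Pp k * Pm k = of_real ((cmod (Pp k))\<^sup>2)"
        by (simp only: conj[symmetric] complex_norm_square)
      finally show "Lact a b Pp k * Pm k - Pp k * Lact a b Pm k = 2 * \<i> * of_real ((cmod (Pp k))\<^sup>2)" .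
    qed
    then show ?thesis unfolding bnd_def by simp
  qed
  also have "\<dots> = 2 * \<i> * infsum (\<lambda>k. complex_of_real ((cmod (Pp k))\<^sup>2)) UNIV"
    by (rule infsum_cmult_right) (use summable_on_of_real[OF s] in simp)
  also have "infsum (\<lambda>k. complex_of_real ((cmod (Pp k))\<^sup>2)) UNIV = of_real 1"
    using infsumI[OF has_sum_of_real[OF has_sum_infsum[OF s], unfolded norm_sq]] .
  finally show ?thesis by simp
qed

definition "\<alpha> v = bnd v Pp"
definition "\<beta> v = bnd v Pm"

lemma Pp_cnj: "(\<lambda>k. cnj (Pm k)) = Pp" using conj by (auto simp: fun_eq_iff conj[symmetric])

lemma alpha_cnj: "u \<in> Dstar a b \<Longrightarrow> \<alpha> (\<lambda>k. cnj (u k)) = cnj (\<beta> u)"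
  unfolding \<alpha>_def \<beta>_def using bnd_cnj[OF _ Pm_Dstar, of u] Pp_cnj by simp

lemma beta_cnj: "u \<in> Dstar a b \<Longrightarrow> \<beta> (\<lambda>k. cnj (u k)) = cnj (\<alpha> u)"
  unfolding \<alpha>_def \<beta>_def using bnd_cnj[OF _ Pp_Dstar, of u] Pm_is by simp

lemma sym_form:
  assumes "u \<in> Dstar a b" "w \<in> Dstar a b"
  shows "2 * \<i> * bnd (\<lambda>k. cnj (u k)) w = cnj (\<beta> u) * \<beta> w - cnj (\<alpha> u) * \<alpha> w"
  using bnd_plucker[OF Dstar_cnj[OF assms(1)] assms(2)] alpha_cnj[OF assms(1)] beta_cnj[OF assms(1)]
  unfolding bnd_PpPm \<alpha>_def \<beta>_def by (simp add: mult.commute)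

end



context jac2
begin

lemma adj_some:
  assumes "w \<in> adj_dom A DA"
  shows "adj A DA w \<in> l2 \<and> (\<forall>u\<in>DA. l2_inner (A u) w = l2_inner u (adj A DA w))"
proof -
  obtain z where z: "z \<in> l2 \<and> (\<forall>u\<in>DA. l2_inner (A u) w = l2_inner u z)"
    using assms unfolding adj_dom_def by blast
  show ?thesis unfolding adj_def by (rule someI[of _ z]) (rule z)
qed

lemma green0:
  assumes "u \<in> Dstar a b" "w \<in> Dstar a b" "bnd (\<lambda>k. cnj (u k)) w = 0"
  shows "l2_inner (Lact a b u) w = l2_inner u (Lact a b w)"
  using green[OF assms(1,2)] assms(3) by simp

lemma sae_basic:
  assumes sa: "self_adjoint_ext (Lact a b) fin_seq A DA"
  shows "DA \<subseteq> Dstar a b" "\<forall>v\<in>DA. A v = Lact a b v"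
    "\<forall>u\<in>DA. \<forall>w\<in>DA. bnd (\<lambda>k. cnj (u k)) w = 0"
    "\<forall>w\<in>Dstar a b. (\<forall>u\<in>DA. bnd (\<lambda>k. cnj (u k)) w = 0) \<longrightarrow> w \<in> DA"
proof -
  have fin: "fin_seq \<subseteq> DA" and l2D: "DA \<subseteq> l2" and Afin: "\<And>v. v \<in> fin_seq \<Longrightarrow> A v = Lact a b v"
    and dom: "adj_dom A DA = DA" and adjA: "\<And>w. w \<in> DA \<Longrightarrow> adj A DA w = A w"
    using sa unfolding self_adjoint_ext_def by auto
  have AL: "A w = Lact a b w" if "w \<in> DA" for w
  proof -
    have p: "adj A DA w \<in> l2 \<and> (\<forall>u\<in>DA. l2_inner (A u) w = l2_inner u (adj A DA w))"
      using adj_some[of w A DA] that dom by simp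
    have "Lact a b w = adj A DA w" by (rule adj_char[OF fin Afin]) (use p in auto)
    then show ?thesis using adjA[OF that] by simp
  qed
  have AL2: "A w \<in> l2" if "w \<in> DA" for w
    using adj_some[of w A DA] that dom adjA[OF that] by simp
  show sub: "DA \<subseteq> Dstar a b"
    using l2D AL AL2 by (auto simp: Dstar_def)
  show "\<forall>v\<in>DA. A v = Lact a b v" using AL by blast
  show "\<forall>u\<in>DA. \<forall>w\<in>DA. bnd (\<lambda>k. cnj (u k)) w = 0"
  proof (intro ballI)
    fix u w assume u: "u \<in> DA" and w: "w \<in> DA"
    have p: "l2_inner (A u) w = l2_inner u (adj A DA w)"
      using adj_some[of w A DA] w dom u by simp
    then have "l2_inner (Lact a b u) w = l2_inner u (Lact a b w)"
      using AL[OF u] AL[OF w] adjA[OF w] by simp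
    then show "bnd (\<lambda>k. cnj (u k)) w = 0"
      using green[of u w] sub u w by auto
  qed
  show "\<forall>w\<in>Dstar a b. (\<forall>u\<in>DA. bnd (\<lambda>k. cnj (u k)) w = 0) \<longrightarrow> w \<in> DA"
  proof (intro ballI impI)
    fix w assume w: "w \<in> Dstar a b" and H: "\<forall>u\<in>DA. bnd (\<lambda>k. cnj (u k)) w = 0"
    have "\<forall>u\<in>DA. l2_inner (A u) w = l2_inner u (Lact a b w)"
      using AL green0 H sub w by auto
    moreover have "w \<in> l2" "Lact a b w \<in> l2" using w by (auto simp: Dstar_def)
    ultimately have "w \<in> adj_dom A DA" unfolding adj_dom_def by blast
    then show "w \<in> DA" using dom by simp
  qed
qed

definition "psi \<theta> = (\<lambda>k. exp (\<i> * of_real \<theta>) * Pp k + exp (- \<i> * of_real \<theta>) * Pm k)"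

lemma psi_Dstar: "psi \<theta> \<in> Dstar a b"
  unfolding psi_def by (rule Dstar_lin[OF Pp_Dstar Pm_Dstar])

lemma Dtheta_iff: "v \<in> Dtheta a b Pp Pm \<theta> \<longleftrightarrow> v \<in> Dstar a b \<and> bnd v (psi \<theta>) = 0"
proof
  assume v: "v \<in> Dtheta a b Pp Pm \<theta>"
  then have vD: "v \<in> Dstar a b" and t: "(\<lambda>N. wronskian a v (psi \<theta>) (int N)) \<longlonglongrightarrow> 0"
    unfolding Dtheta_def psi_def by auto
  then show "v \<in> Dstar a b \<and> bnd v (psi \<theta>) = 0"
    using bnd_unique[OF vD psi_Dstar t] by simp
next
  assume "v \<in> Dstar a b \<and> bnd v (psi \<theta>) = 0"
  then have vD: "v \<in> Dstar a b" and b0: "bnd v (psi \<theta>) = 0" by auto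
  have "(\<lambda>N. wronskian a v (psi \<theta>) (int N)) \<longlonglongrightarrow> 0" using Wlim[OF vD psi_Dstar, of \<theta>] b0 by simp
  then show "v \<in> Dtheta a b Pp Pm \<theta>" using vD unfolding Dtheta_def psi_def by auto
qed

lemma bnd_psi: "v \<in> Dstar a b \<Longrightarrow> bnd v (psi \<theta>) = exp (\<i> * of_real \<theta>) * \<alpha> v + exp (- \<i> * of_real \<theta>) * \<beta> v"
  unfolding psi_def \<alpha>_def \<beta>_def by (rule bnd_lin2[OF _ Pp_Dstar Pm_Dstar])

lemma EE: "exp (\<i> * of_real \<theta>) * exp (- \<i> * of_real \<theta>) = 1"
  by (simp add: exp_add[symmetric])

lemma cnjE: "cnj (exp (\<i> * of_real \<theta>)) = exp (- \<i> * of_real \<theta>)"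
  "cnj (exp (- \<i> * of_real \<theta>)) = exp (\<i> * of_real \<theta>)"
  by (simp_all add: exp_cnj)

lemma psi_cnj: "(\<lambda>k. cnj (psi \<theta> k)) = psi \<theta>"
  unfolding psi_def using cnjE[of \<theta>] conj Pp_cnj
  by (auto simp: fun_eq_iff conj[symmetric])

lemma sym_theta:
  assumes u: "u \<in> Dtheta a b Pp Pm \<theta>" and w: "w \<in> Dtheta a b Pp Pm \<theta>"
  shows "bnd (\<lambda>k. cnj (u k)) w = 0"
proof -
  define E where "E = exp (\<i> * of_real \<theta>)"
  define E' where "E' = exp (- \<i> * of_real \<theta>)"
  have uD: "u \<in> Dstar a b" and wD: "w \<in> Dstar a b" using u w Dtheta_iff by auto
  have eu: "E * \<alpha> u + E' * \<beta> u = 0" using u Dtheta_iff bnd_psi uD unfolding E_def E'_def by auto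
  have ew: "E * \<alpha> w + E' * \<beta> w = 0" using w Dtheta_iff bnd_psi wD unfolding E_def E'_def by auto
  have "cnj (E * \<alpha> u + E' * \<beta> u) = 0" using eu by simp
  then have ecu: "E' * cnj (\<alpha> u) + E * cnj (\<beta> u) = 0"
    using cnjE[of \<theta>] unfolding E_def E'_def by simp
  have "cnj (\<beta> u) * \<beta> w - cnj (\<alpha> u) * \<alpha> w = 0"
    by (rule alg_sym[OF _ ew ecu]) (unfold E_def E'_def, rule EE)
  then have "2 * \<i> * bnd (\<lambda>k. cnj (u k)) w = 0" using sym_form[OF uD wD] by simp
  then show ?thesis by simp
qed

lemma theta_to_sa:
  assumes DA: "DA = Dtheta a b Pp Pm \<theta>" and A: "\<forall>v\<in>DA. A v = Lact a b v"
  shows "self_adjoint_ext (Lact a b) fin_seq A DA"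
proof -
  have fin: "fin_seq \<subseteq> DA"
  proof
    fix u :: "int \<Rightarrow> complex" assume u: "u \<in> fin_seq"
    have uD: "u \<in> Dstar a b" by (rule fin_Dstar[OF u])
    have "bnd u (psi \<theta>) = 0" by (rule bnd_unique[OF uD psi_Dstar fin_wr_eventually[OF u]])
    then show "u \<in> DA" unfolding DA Dtheta_iff using uD by simp
  qed
  have DD: "DA \<subseteq> Dstar a b" unfolding DA using Dtheta_iff by auto
  have Afin: "\<And>u. u \<in> fin_seq \<Longrightarrow> A u = Lact a b u" using fin A by auto
  have dom: "adj_dom A DA = DA"
  proof
    show "adj_dom A DA \<subseteq> DA"
    proof
      fix w assume "w \<in> adj_dom A DA"
      then obtain z where wl2: "w \<in> l2" and "z \<in> l2" and H: "\<forall>u\<in>DA. l2_inner (A u) w = l2_inner u z"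
        unfolding adj_dom_def by blast
      have Lz: "Lact a b w = z" by (rule adj_char[OF fin Afin]) (use H in auto)
      have wD: "w \<in> Dstar a b" using wl2 \<open>z \<in> l2\<close> Lz by (simp add: Dstar_def)
      have psiDA: "psi \<theta> \<in> DA"
        unfolding DA Dtheta_iff using psi_Dstar bnd_antisym[OF psi_Dstar psi_Dstar, of \<theta> \<theta>] by simp
      have "l2_inner (Lact a b (psi \<theta>)) w = l2_inner (psi \<theta>) (Lact a b w)"
        using H psiDA A Lz by auto
      then have "bnd (\<lambda>k. cnj (psi \<theta> k)) w = 0" using green[OF psi_Dstar wD, of \<theta>] by simp
      then have "bnd (psi \<theta>) w = 0" unfolding psi_cnj .
      then have "bnd w (psi \<theta>) = 0" using bnd_antisym[OF psi_Dstar wD] by simp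
      then show "w \<in> DA" unfolding DA Dtheta_iff using wD by simp
    qed
    show "DA \<subseteq> adj_dom A DA"
    proof
      fix w assume w: "w \<in> DA"
      then have wD: "w \<in> Dstar a b" using DD by auto
      have "\<forall>u\<in>DA. l2_inner (A u) w = l2_inner u (Lact a b w)"
      proof
        fix u assume u: "u \<in> DA"
        have "bnd (\<lambda>k. cnj (u k)) w = 0" using sym_theta u w DA by simp
        then show "l2_inner (A u) w = l2_inner u (Lact a b w)"
          using green0[of u w] DD u wD A by auto
      qed
      then show "w \<in> adj_dom A DA" unfolding adj_dom_def using wD by (auto simp: Dstar_def)
    qed
  qed
  have adjA: "adj A DA w = A w" if w: "w \<in> DA" for w
  proof -
    have p: "adj A DA w \<in> l2 \<and> (\<forall>u\<in>DA. l2_inner (A u) w = l2_inner u (adj A DA w))"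
      using adj_some[of w A DA] w dom by simp
    have "Lact a b w = adj A DA w" by (rule adj_char[OF fin Afin]) (use p in auto)
    then show ?thesis using A w by simp
  qed
  show ?thesis unfolding self_adjoint_ext_def
    using fin DD dom adjA A Afin by (auto simp: Dstar_def)
qed

lemma exists_theta:
  fixes x y :: complex
  assumes "y \<noteq> 0" "cmod x = cmod y"
  shows "\<exists>\<theta>\<in>{0..<2 * pi}. exp (\<i> * of_real \<theta>) * exp (\<i> * of_real \<theta>) * cnj y = - cnj x"
proof -
  define \<zeta> where "\<zeta> = - cnj x / cnj y"
  have n1: "cmod \<zeta> = 1" using assms by (simp add: \<zeta>_def norm_divide)
  then have z0: "\<zeta> \<noteq> 0" by auto
  define t where "t = Arg \<zeta>"
  have "cis t = \<zeta>" unfolding t_def using cis_Arg[OF z0] n1 by (simp add: sgn_div_norm)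
  then have et: "exp (\<i> * of_real t) = \<zeta>" by (simp add: cis_conv_exp)
  have tb: "- pi < t" "t \<le> pi" using Arg_bounded[of \<zeta>] by (auto simp: t_def)
  define \<theta> where "\<theta> = (if t \<ge> 0 then t / 2 else t / 2 + pi)"
  have th: "\<theta> \<in> {0..<2 * pi}" using tb pi_gt_zero by (auto simp: \<theta>_def)
  have "exp (\<i> * of_real \<theta>) * exp (\<i> * of_real \<theta>) = exp (\<i> * of_real t)"
  proof (cases "t \<ge> 0")
    case True
    then show ?thesis by (simp add: \<theta>_def exp_add[symmetric] algebra_simps)
  next
    case False
    have "exp (\<i> * of_real \<theta>) * exp (\<i> * of_real \<theta>) = exp (\<i> * of_real t + 2 * pi * \<i>)"
      using False by (simp add: \<theta>_def exp_add[symmetric] algebra_simps)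
    also have "\<dots> = exp (\<i> * of_real t)" by (simp add: exp_add)
    finally show ?thesis .
  qed
  then have "exp (\<i> * of_real \<theta>) * exp (\<i> * of_real \<theta>) * cnj y = - cnj x"
    using et assms(1) by (simp add: \<zeta>_def)
  then show ?thesis using th by blast
qed

lemma sa_to_theta:
  assumes sa: "self_adjoint_ext (Lact a b) fin_seq A DA"
  shows "\<exists>\<theta>\<in>{0..<2 * pi}. DA = Dtheta a b Pp Pm \<theta> \<and> (\<forall>v\<in>DA. A v = Lact a b v)"
proof -
  note B = sae_basic[OF sa]
  have ex: "\<exists>u0\<in>DA. \<alpha> u0 \<noteq> 0 \<or> \<beta> u0 \<noteq> 0"
  proof (rule ccontr)
    assume "\<not> (\<exists>u0\<in>DA. \<alpha> u0 \<noteq> 0 \<or> \<beta> u0 \<noteq> 0)"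
    then have Z: "\<forall>u\<in>DA. \<alpha> u = 0 \<and> \<beta> u = 0" by blast
    have "\<forall>u\<in>DA. bnd (\<lambda>k. cnj (u k)) Pp = 0"
    proof
      fix u assume u: "u \<in> DA"
      have "2 * \<i> * bnd (\<lambda>k. cnj (u k)) Pp = 0"
        using sym_form[of u Pp] Z u B(1) Pp_Dstar by auto
      then show "bnd (\<lambda>k. cnj (u k)) Pp = 0" by simp
    qed
    then have "Pp \<in> DA" using B(4) Pp_Dstar by blast
    then have "\<beta> Pp = 0" using Z by blast
    then show False using bnd_PpPm by (simp add: \<beta>_def)
  qed
  then obtain u0 where u0: "u0 \<in> DA" and nz: "\<alpha> u0 \<noteq> 0 \<or> \<beta> u0 \<noteq> 0" by blast
  define x where "x = \<alpha> u0"
  define y where "y = \<beta> u0"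
  have u0D: "u0 \<in> Dstar a b" using u0 B(1) by auto
  have "2 * \<i> * bnd (\<lambda>k. cnj (u0 k)) u0 = 0" using B(3) u0 by simp
  then have "cnj y * y - cnj x * x = 0" using sym_form[OF u0D u0D] by (simp add: x_def y_def)
  then have "(cmod y)\<^sup>2 = (cmod x)\<^sup>2"
    by (metis complex_norm_square mult.commute of_real_eq_iff right_minus_eq)
  then have cxy: "cmod x = cmod y" by (simp add: power2_eq_iff_nonneg)
  have y0: "y \<noteq> 0" using nz cxy by (auto simp: x_def y_def)
  obtain \<theta> where th: "\<theta> \<in> {0..<2 * pi}" and Eq: "exp (\<i> * of_real \<theta>) * exp (\<i> * of_real \<theta>) * cnj y = - cnj x"
    using exists_theta[OF y0 cxy] by blast
  define E where "E = exp (\<i> * of_real \<theta>)"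
  define E' where "E' = exp (- \<i> * of_real \<theta>)"
  have EE': "E * E' = 1" unfolding E_def E'_def by (rule EE)
  have Eq': "E * E * cnj y = - cnj x" using Eq by (simp add: E_def)
  have sub1: "DA \<subseteq> Dtheta a b Pp Pm \<theta>"
  proof
    fix u assume u: "u \<in> DA"
    have uD: "u \<in> Dstar a b" using u B(1) by auto
    have "2 * \<i> * bnd (\<lambda>k. cnj (u0 k)) u = 0" using B(3) u0 u by simp
    then have h: "cnj y * \<beta> u - cnj x * \<alpha> u = 0" using sym_form[OF u0D uD] by (simp add: x_def y_def)
    have "cnj y * (\<beta> u + E * E * \<alpha> u) = 0" using h Eq' by algebra
    then have "\<beta> u + E * E * \<alpha> u = 0" using y0 by simp
    then have "E' * (\<beta> u + E * E * \<alpha> u) = 0" by simp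
    then have "E * \<alpha> u + E' * \<beta> u = 0" using EE' by algebra
    then have "bnd u (psi \<theta>) = 0" using bnd_psi[OF uD] by (simp add: E_def E'_def)
    then show "u \<in> Dtheta a b Pp Pm \<theta>" using Dtheta_iff uD by simp
  qed
  have sub2: "Dtheta a b Pp Pm \<theta> \<subseteq> DA"
  proof
    fix w assume w: "w \<in> Dtheta a b Pp Pm \<theta>"
    then have wD: "w \<in> Dstar a b" using Dtheta_iff by simp
    have "\<forall>u\<in>DA. bnd (\<lambda>k. cnj (u k)) w = 0"
      using sym_theta[OF _ w] sub1 by blast
    then show "w \<in> DA" using B(4) wD by blast
  qed
  show ?thesis using th sub1 sub2 B(2) by blast
qed

end


theorem lemma4p2p3:
  fixes a b :: "int \<Rightarrow> real" and Pp Pm :: "int \<Rightarrow> complex"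
  assumes apos: "\<And>k. a k > 0"
    and Jm: "def_indices_00 (Jminus a b) fin_seq"
    and Jp: "def_indices_11 (Jplus a b) fin_seq"
    and Pp_l2: "Pp \<in> l2" and Pm_l2: "Pm \<in> l2"
    and Pp_eig: "Lact a b Pp = (\<lambda>k. \<i> * Pp k)"
    and Pm_eig: "Lact a b Pm = (\<lambda>k. - \<i> * Pm k)"
    and conj: "\<And>k. cnj (Pp k) = Pm k"
    and Pp_norm: "l2_norm Pp = 1" and Pm_norm: "l2_norm Pm = 1"
  shows "\<forall>A DA. self_adjoint_ext (Lact a b) fin_seq A DA \<longleftrightarrow>
           (\<exists>\<theta> \<in> {0..<2 * pi}. DA = Dtheta a b Pp Pm \<theta> \<and> (\<forall>v \<in> DA. A v = Lact a b v))"
proof -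
  have Pp_nz: "Pp \<noteq> (\<lambda>k. 0)"
  proof
    assume "Pp = (\<lambda>k. 0)"
    then have "l2_norm Pp = 0" by (simp add: l2_norm_def)
    then show False using Pp_norm by simp
  qed
  have "jac2 a b Pp Pm"
    unfolding jac2_def jac_def jac2_axioms_def using apos Jm Pp_l2 Pp_eig Pm_eig conj Pp_nz Pp_norm by blast
  then interpret J: jac2 a b Pp Pm .
  show ?thesis
  proof (intro allI iffI)
    fix A DA
    assume "self_adjoint_ext (Lact a b) fin_seq A DA"
    then show "\<exists>\<theta>\<in>{0..<2 * pi}. DA = Dtheta a b Pp Pm \<theta> \<and> (\<forall>v\<in>DA. A v = Lact a b v)"
      by (rule J.sa_to_theta)
  next
    fix A DA
    assume "\<exists>\<theta>\<in>{0..<2 * pi}. DA = Dtheta a b Pp Pm \<theta> \<and> (\<forall>v\<in>DA. A v = Lact a b v)"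
    then obtain \<theta> where "DA = Dtheta a b Pp Pm \<theta>" "\<forall>v\<in>DA. A v = Lact a b v" by blast
    then show "self_adjoint_ext (Lact a b) fin_seq A DA" by (rule J.theta_to_sa)
  qed
qed

end
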